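(* Let $(b_n)_{n\ge 0}$ and $(e_n)_{n\ge 0}$ be sequences of real numbers satisfying: (1) $b_n>0$ for all sufficiently large $n$; (2) there is a constant $C$ such that $\displaystyle \frac{\sum_{k=0}^{2n} b_k}{\sum_{k=0}^{n} b_k}<C$ for all sufficiently large $n$; (3) $\displaystyle\limsup_{n\to\infty} b_n<1$; (4) $\displaystyle\lim_{n\to\infty}\frac{\left(\sum_{k=0}^n b_k^2\right)\left(\sum_{k=0}^n e_k^2\right)}{\left(\sum_{k=0}^n b_k\right)^3}=0$. Then there is no set $A\subseteq\mathbb{N}$ such that for every $N\ge 0$ $$\sum_{n=0}^N R_A(n)=\sum_{n=0}^N\sum_{k=0}^n b_kb_{n-k}+e_N .$$
   Context: $\mathbb{N}$ denotes the set of non-negative integers. For $A\subseteq\mathbb{N}$, $R_A(n)$ denotes the number of ordered pairs $(a,a')$ with $a,a'\in A$ and $a+a'=n$; equivalently $R_A(n)=\sum_{k=0}^n\chi_A(k)\chi_A(n-k)$ where $\chi_A$ is the characteristic function of $A$. *)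

theory Defs
  imports "HOL-Analysis.Analysis"
begin

definition R :: "nat set \<Rightarrow> nat \<Rightarrow> nat" where
  "R A n = card {(a, a'). a \<in> A \<and> a' \<in> A \<and> a + a' = n}"

end

theory Submission
  imports Defs
begin

lemma radius_bounded:
  fixes f :: "real fps"
  assumes "\<And>n. \<bar>fps_nth f n\<bar> \<le> K"
  shows "fps_conv_radius f \<ge> 1"
  unfolding fps_conv_radius_def
proof (rule conv_radius_geI_ex')
  fix r :: real assume r: "0 < r" "ereal r < 1"
  hence r1: "r < 1" by simp
  show "summable (\<lambda>n. fps_nth f n * of_real r ^ n)"
  proof (rule summable_comparison_test[where g="\<lambda>n. K * r ^ n"])
    show "\<exists>N. \<forall>n\<ge>N. norm (fps_nth f n * of_real r ^ n) \<le> K * r ^ n"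
      using assms r by (auto simp: abs_mult intro!: mult_right_mono)
    show "summable (\<lambda>n. K * r ^ n)" using r r1 by (intro summable_mult summable_geometric) auto
  qed
qed

lemma radius_sq:
  fixes f :: "real fps"
  assumes "fps_conv_radius f \<ge> 1"
  shows "fps_conv_radius (Abs_fps (\<lambda>n. (fps_nth f n)^2)) \<ge> 1"
  unfolding fps_conv_radius_def
proof (rule conv_radius_geI_ex')
  fix r :: real assume r: "0 < r" "ereal r < 1"
  hence r1: "r < 1" by simp
  define s where "s = sqrt r"
  have s: "0 < s" "s < 1" using r r1 by (auto simp: s_def)
  have "ereal (norm s) < 1" using s by simp
  hence "norm s < fps_conv_radius f" using assms by (rule order.strict_trans2)
  hence sm: "summable (\<lambda>n. norm (fps_nth f n * s ^ n))" by (rule norm_summable_fps)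
  hence "(\<lambda>n. norm (fps_nth f n * s ^ n)) \<longlonglongrightarrow> 0" by (rule summable_LIMSEQ_zero)
  hence "eventually (\<lambda>n. norm (fps_nth f n * s ^ n) < 1) sequentially"
    by (rule order_tendstoD) simp
  then obtain N where N: "\<And>n. n \<ge> N \<Longrightarrow> norm (fps_nth f n * s ^ n) < 1"
    by (auto simp: eventually_sequentially)
  show "summable (\<lambda>n. fps_nth (Abs_fps (\<lambda>n. (fps_nth f n)\<^sup>2)) n * of_real r ^ n)"
  proof (rule summable_comparison_test[OF _ sm])
    show "\<exists>N. \<forall>n\<ge>N. norm (fps_nth (Abs_fps (\<lambda>n. (fps_nth f n)\<^sup>2)) n * of_real r ^ n) \<le> norm (fps_nth f n * s ^ n)"
    proof (intro exI allI impI)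
      fix n assume "n \<ge> N"
      from N[OF this] have h: "\<bar>fps_nth f n * s ^ n\<bar> < 1" by simp
      have "(s^n)^2 = (s^2)^n" by (metis power_mult mult.commute)
      moreover have "s^2 = r" using r by (simp add: s_def)
      ultimately have "r ^ n = (s^n)^2" by simp
      hence "norm (fps_nth (Abs_fps (\<lambda>n. (fps_nth f n)\<^sup>2)) n * of_real r ^ n) = (fps_nth f n * s ^ n)^2"
        by (simp add: power_mult_distrib)
      also have "\<dots> = \<bar>fps_nth f n * s ^ n\<bar> * \<bar>fps_nth f n * s ^ n\<bar>" by (simp add: power2_eq_square)
      also have "\<dots> \<le> 1 * \<bar>fps_nth f n * s ^ n\<bar>" using h by (intro mult_right_mono) auto
      finally show "norm (fps_nth (Abs_fps (\<lambda>n. (fps_nth f n)\<^sup>2)) n * of_real r ^ n) \<le> norm (fps_nth f n * s ^ n)" by simp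
    qed
  qed
qed

lemma CS_series:
  fixes a b :: "nat \<Rightarrow> real"
  assumes "summable (\<lambda>n. (a n)^2)" "summable (\<lambda>n. (b n)^2)"
  shows "summable (\<lambda>n. a n * b n)" "(\<Sum>n. a n * b n)^2 \<le> (\<Sum>n. (a n)^2) * (\<Sum>n. (b n)^2)"
proof -
  have ab: "\<bar>a n * b n\<bar> \<le> ((a n)^2 + (b n)^2)/2" for n
  proof -
    have "0 \<le> (\<bar>a n\<bar> - \<bar>b n\<bar>)^2" by simp
    also have "\<dots> = (a n)^2 - 2 * \<bar>a n * b n\<bar> + (b n)^2" by (simp add: power2_diff abs_mult)
    finally show ?thesis by simp
  qed
  show sab: "summable (\<lambda>n. a n * b n)"
    by (rule summable_comparison_test[where g="\<lambda>n. ((a n)^2 + (b n)^2)/2"])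
       (use ab assms in \<open>auto intro!: summable_add summable_divide\<close>)
  have l1: "(\<lambda>L. (\<Sum>n<L. a n * b n)^2) \<longlonglongrightarrow> (\<Sum>n. a n * b n)^2"
    by (intro tendsto_power summable_LIMSEQ sab)
  have l2: "(\<lambda>L. (\<Sum>n<L. (a n)^2) * (\<Sum>n<L. (b n)^2)) \<longlonglongrightarrow> (\<Sum>n. (a n)^2) * (\<Sum>n. (b n)^2)"
    by (intro tendsto_mult summable_LIMSEQ assms)
  have l3: "(\<Sum>n<L. a n * b n)^2 \<le> (\<Sum>n<L. (a n)^2) * (\<Sum>n<L. (b n)^2)" for L
    by (rule Cauchy_Schwarz_ineq_sum)
  show "(\<Sum>n. a n * b n)^2 \<le> (\<Sum>n. (a n)^2) * (\<Sum>n. (b n)^2)"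
    by (rule LIMSEQ_le[OF l1 l2]) (use l3 in auto)
qed

lemma lt_radius:
  fixes f :: "real fps" and x :: real
  assumes "fps_conv_radius f \<ge> 1" "0 \<le> x" "x < 1"
  shows "norm x < fps_conv_radius f"
proof -
  have "norm x < 1" using assms by (simp add: real_norm_def)
  hence "ereal (norm x) < 1" by simp
  thus ?thesis using assms(1) by (rule order.strict_trans2)
qed

lemma summable_sq:
  fixes a :: "nat \<Rightarrow> real"
  assumes "summable (\<lambda>n. \<bar>a n\<bar>)"
  shows "summable (\<lambda>n. (a n)^2)"
proof -
  have "(\<lambda>n. \<bar>a n\<bar>) \<longlonglongrightarrow> 0" by (rule summable_LIMSEQ_zero[OF assms])
  hence "eventually (\<lambda>n. \<bar>a n\<bar> < 1) sequentially" by (rule order_tendstoD) simp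
  then obtain N where N: "\<And>n. n \<ge> N \<Longrightarrow> \<bar>a n\<bar> < 1" by (auto simp: eventually_sequentially)
  show ?thesis
  proof (rule summable_comparison_test[OF _ assms])
    show "\<exists>N. \<forall>n\<ge>N. norm ((a n)^2) \<le> \<bar>a n\<bar>"
    proof (intro exI allI impI)
      fix n assume "n \<ge> N"
      from N[OF this] have "\<bar>a n\<bar> * \<bar>a n\<bar> \<le> 1 * \<bar>a n\<bar>" by (intro mult_right_mono) auto
      thus "norm ((a n)^2) \<le> \<bar>a n\<bar>" by (simp add: power2_eq_square abs_mult)
    qed
  qed
qed

lemma root_sum:
  assumes L: "L > 0" and mn: "m < L" "n < L"
  shows "(\<Sum>j<L. cis (2*pi*real j/L)^m * cnj (cis (2*pi*real j/L))^n) = (if m = n then of_nat L else 0)"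
proof -
  define \<zeta> where "\<zeta> = cis (2*pi*(real m - real n)/L)"
  have eq: "cis (2*pi*real j/L)^m * cnj (cis (2*pi*real j/L))^n = \<zeta>^j" for j :: nat
  proof -
    have e1: "cis (2*pi*real j/L)^m = cis (real m * (2*pi*real j/L))" by (rule Complex.DeMoivre)
    have e2: "cnj (cis (2*pi*real j/L))^n = cis (real n * (-(2*pi*real j/L)))" by (simp only: cis_cnj Complex.DeMoivre)
    have "cis (2*pi*real j/L)^m * cnj (cis (2*pi*real j/L))^n = cis (real m * (2*pi*real j/L) + real n * (-(2*pi*real j/L)))"
      unfolding e1 e2 cis_mult ..
    also have "\<dots> = cis (real j * (2*pi*(real m - real n)/L))"
      by (rule arg_cong[where f=cis]) (use L in \<open>simp add: field_simps\<close>)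
    also have "\<dots> = \<zeta>^j" by (simp add: \<zeta>_def Complex.DeMoivre)
    finally show ?thesis .
  qed
  show ?thesis
  proof (cases "m = n")
    case True
    have "\<zeta> = 1" using True by (simp add: \<zeta>_def)
    show ?thesis unfolding eq \<open>\<zeta> = 1\<close> using True by simp
  next
    case False
    have z1: "\<zeta> \<noteq> 1"
    proof
      assume "\<zeta> = 1"
      hence "cos (2*pi*(real m - real n)/L) = 1" unfolding \<zeta>_def by (metis cis.sel(1) one_complex.sel(1))
      then obtain k :: int where k: "2*pi*(real m - real n)/L = k * 2 * pi" by (auto simp: cos_one_2pi_int)
      hence "pi * (2*(real m - real n)) = pi * (2*(k*L))" using L by (simp add: field_simps)
      hence "2*(real m - real n) = 2*(k*L)" using pi_neq_zero by (metis mult_left_cancel)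
      hence "real m - real n = k * L" by simp
      hence "int m - int n = k * int L" by (metis of_int_eq_iff of_int_diff of_int_mult of_int_of_nat_eq)
      note km = this
      have "k \<noteq> 0" using False km by auto
      hence "1 \<le> \<bar>k\<bar>" by linarith
      hence "1 * int L \<le> \<bar>k\<bar> * int L" by (intro mult_right_mono) auto
      moreover have "\<bar>k\<bar> * int L = \<bar>int m - int n\<bar>" using km by (simp add: abs_mult)
      moreover have "\<bar>int m - int n\<bar> < int L" using mn by linarith
      ultimately show False by linarith
    qed
    have zL: "\<zeta>^L = 1"
    proof -
      have "\<zeta>^L = cis (2*pi*(real m - real n))" using L by (simp add: \<zeta>_def Complex.DeMoivre)
      also have "\<dots> = cis (2*pi*(of_int (int m - int n)))" by simp
      also have "\<dots> = 1" by (rule cis_multiple_2pi) simp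
      finally show ?thesis .
    qed
    have "(\<Sum>j<L. \<zeta>^j) = 0" using z1 zL by (simp add: geometric_sum)
    note zs = this
    show ?thesis unfolding eq using False zs by simp
  qed
qed

lemma parseval:
  fixes a :: "nat \<Rightarrow> real" assumes L: "L > 0"
  shows "(\<Sum>j::nat\<in>{..<L}. (cmod (\<Sum>n<L. of_real (a n) * cis (2*pi*real j/L)^n))^2) = real L * (\<Sum>n<L. (a n)^2)"
proof -
  define w where "w j = cis (2*pi*real j/L)" for j :: nat
  have "complex_of_real (\<Sum>j::nat\<in>{..<L}. (cmod (\<Sum>n<L. of_real (a n) * w j^n))^2)
      = (\<Sum>j<L. (\<Sum>m<L. of_real (a m) * w j^m) * cnj (\<Sum>n<L. of_real (a n) * w j^n))"
    by (simp only: of_real_sum complex_norm_square)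
  also have "\<dots> = (\<Sum>j<L. \<Sum>m<L. \<Sum>n<L. (of_real (a m) * w j^m) * cnj (of_real (a n) * w j^n))"
    by (simp only: sum_product cnj_sum)
  also have "\<dots> = (\<Sum>j<L. \<Sum>m<L. \<Sum>n<L. of_real (a m * a n) * (w j^m * cnj (w j)^n))"
    by (intro sum.cong refl) (simp add: mult_ac)
  also have "\<dots> = (\<Sum>m<L. \<Sum>j<L. \<Sum>n<L. of_real (a m * a n) * (w j^m * cnj (w j)^n))"
    by (rule sum.swap)
  also have "\<dots> = (\<Sum>m<L. \<Sum>n<L. \<Sum>j<L. of_real (a m * a n) * (w j^m * cnj (w j)^n))"
    by (intro sum.cong refl sum.swap)
  also have "\<dots> = (\<Sum>m<L. \<Sum>n<L. of_real (a m * a n) * (\<Sum>j<L. w j^m * cnj (w j)^n))"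
    by (simp only: sum_distrib_left)
  also have "\<dots> = (\<Sum>m<L. \<Sum>n<L. of_real (a m * a n) * (if m = n then of_nat L else 0))"
    by (intro sum.cong refl) (simp add: w_def root_sum[OF L])
  also have "\<dots> = complex_of_real (real L * (\<Sum>n<L. (a n)^2))"
    by (simp add: if_distrib sum_distrib_left power2_eq_square mult.commute cong: if_cong)
  finally show ?thesis unfolding w_def of_real_eq_iff .
qed

lemma ABS:
  fixes p q u v :: "nat \<Rightarrow> real"
  assumes sp: "summable (\<lambda>n. \<bar>p n\<bar>)" and sq: "summable (\<lambda>n. \<bar>q n\<bar>)"
    and su: "summable (\<lambda>n. \<bar>u n\<bar>)" and sv: "summable (\<lambda>n. \<bar>v n\<bar>)"
    and conv: "\<And>n. (\<Sum>i\<le>n. p i * p (n-i)) = (\<Sum>i\<le>n. q i * q (n-i)) + (\<Sum>i\<le>n. u i * v (n-i))"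
  shows "(\<Sum>n. (p n)^2) \<le> (\<Sum>n. (q n)^2) + sqrt (\<Sum>n. (u n)^2) * sqrt (\<Sum>n. (v n)^2)"
proof -
  define ev where "ev a w = (\<Sum>n. complex_of_real (a n) * w^n)" for a :: "nat \<Rightarrow> real" and w :: complex
  define evL where "evL a L w = (\<Sum>n<L. complex_of_real (a n) * w^n)" for a :: "nat \<Rightarrow> real" and L w
  define tl where "tl a L = (\<Sum>n. \<bar>a (n+L)\<bar>)" for a :: "nat \<Rightarrow> real" and L
  define S where "S a = (\<Sum>n. \<bar>a n\<bar>)" for a :: "nat \<Rightarrow> real"
  have nsum: "summable (\<lambda>n. norm (complex_of_real (a n) * w^n))"
    if "summable (\<lambda>n. \<bar>a n\<bar>)" "norm w = 1" for a w
    using that by (simp add: norm_mult norm_power)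
  have F1: "norm (evL a L w) \<le> S a" if "summable (\<lambda>n. \<bar>a n\<bar>)" "norm w = 1" for a L w
  proof -
    have "norm (evL a L w) \<le> (\<Sum>n<L. norm (complex_of_real (a n) * w^n))"
      unfolding evL_def by (rule norm_sum)
    also have "\<dots> = (\<Sum>n<L. \<bar>a n\<bar>)" using that by (simp add: norm_mult norm_power)
    also have "\<dots> \<le> S a" unfolding S_def by (rule sum_le_suminf[OF that(1)]) auto
    finally show ?thesis .
  qed
  have F2: "norm (ev a w) \<le> S a" if "summable (\<lambda>n. \<bar>a n\<bar>)" "norm w = 1" for a w
  proof -
    have "norm (ev a w) \<le> (\<Sum>n. norm (complex_of_real (a n) * w^n))"
      unfolding ev_def by (rule summable_norm[OF nsum[OF that]])
    also have "\<dots> = S a" using that by (simp add: norm_mult norm_power S_def)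
    finally show ?thesis .
  qed
  have F3: "norm (ev a w - evL a L w) \<le> tl a L" if "summable (\<lambda>n. \<bar>a n\<bar>)" "norm w = 1" for a L w
  proof -
    have sm: "summable (\<lambda>n. complex_of_real (a n) * w^n)"
      by (rule summable_norm_cancel[OF nsum[OF that]])
    have "ev a w - evL a L w = (\<Sum>n. complex_of_real (a (n+L)) * w^(n+L))"
      unfolding ev_def evL_def using suminf_minus_initial_segment[OF sm, of L] by simp
    also have "norm \<dots> \<le> (\<Sum>n. norm (complex_of_real (a (n+L)) * w^(n+L)))"
      apply (rule summable_norm)
      using nsum[OF that] summable_iff_shift[of "\<lambda>n. norm (complex_of_real (a n) * w^n)" L] by simp
    also have "\<dots> = tl a L" using that by (simp add: norm_mult norm_power tl_def)
    finally show ?thesis .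
  qed
  have F4: "tl a \<longlonglongrightarrow> 0" if "summable (\<lambda>n. \<bar>a n\<bar>)" for a
  proof -
    have "tl a = (\<lambda>L. S a - (\<Sum>n<L. \<bar>a n\<bar>))"
      using suminf_minus_initial_segment[OF that] by (auto simp: tl_def S_def)
    moreover have "(\<lambda>L. S a - (\<Sum>n<L. \<bar>a n\<bar>)) \<longlonglongrightarrow> S a - S a"
      unfolding S_def by (intro tendsto_diff tendsto_const summable_LIMSEQ that)
    ultimately show ?thesis by simp
  qed
  have F5: "ev a w * ev c w = (\<Sum>k. complex_of_real (\<Sum>i\<le>k. a i * c (k-i)) * w^k)"
    if "summable (\<lambda>n. \<bar>a n\<bar>)" "summable (\<lambda>n. \<bar>c n\<bar>)" "norm w = 1" for a c w
  proof -
    have "ev a w * ev c w = (\<Sum>k. \<Sum>i\<le>k. (complex_of_real (a i) * w^i) * (complex_of_real (c (k-i)) * w^(k-i)))"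
      unfolding ev_def by (rule Cauchy_product[OF nsum[OF that(1,3)] nsum[OF that(2,3)]])
    also have "\<dots> = (\<Sum>k. complex_of_real (\<Sum>i\<le>k. a i * c (k-i)) * w^k)"
      by (intro suminf_cong) (auto simp: sum_distrib_right power_add[symmetric] intro!: sum.cong)
    finally show ?thesis .
  qed
  have F5s: "summable (\<lambda>k. complex_of_real (\<Sum>i\<le>k. a i * c (k-i)) * w^k)"
    if "summable (\<lambda>n. \<bar>a n\<bar>)" "summable (\<lambda>n. \<bar>c n\<bar>)" "norm w = 1" for a c w
  proof -
    have "summable (\<lambda>k. \<Sum>i\<le>k. (complex_of_real (a i) * w^i) * (complex_of_real (c (k-i)) * w^(k-i)))"
      by (rule summable_Cauchy_product[OF nsum[OF that(1,3)] nsum[OF that(2,3)]])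
    moreover have "(\<lambda>k. \<Sum>i\<le>k. (complex_of_real (a i) * w^i) * (complex_of_real (c (k-i)) * w^(k-i)))
        = (\<lambda>k. complex_of_real (\<Sum>i\<le>k. a i * c (k-i)) * w^k)"
      by (auto simp: sum_distrib_right power_add[symmetric] intro!: sum.cong)
    ultimately show ?thesis by simp
  qed
  have F6: "ev p w * ev p w = ev q w * ev q w + ev u w * ev v w" if "norm w = 1" for w
    unfolding F5[OF sp sp that] F5[OF sq sq that] F5[OF su sv that] conv of_real_add distrib_right
    by (rule suminf_add[symmetric]) (use F5s[OF sq sq that] F5s[OF su sv that] in auto)
  define \<delta> where "\<delta> L = 2 * S p * tl p L + 2 * S q * tl q L + S u * tl v L + S v * tl u L" for L
  have \<delta>0: "\<delta> \<longlonglongrightarrow> 0"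
  proof -
    have "\<delta> \<longlonglongrightarrow> 2 * S p * 0 + 2 * S q * 0 + S u * 0 + S v * 0"
      unfolding \<delta>_def by (intro tendsto_intros F4 sp sq su sv)
    thus ?thesis by simp
  qed
  have pt: "norm (evL p L w * evL p L w - evL q L w * evL q L w - evL u L w * evL v L w) \<le> \<delta> L"
    if w: "norm w = 1" for L w
  proof -
    have e: "evL p L w * evL p L w - evL q L w * evL q L w - evL u L w * evL v L w
      = (evL p L w - ev p w) * (evL p L w + ev p w) - (evL q L w - ev q w) * (evL q L w + ev q w)
        - ((evL u L w - ev u w) * evL v L w + ev u w * (evL v L w - ev v w))"
      using F6[OF w] by (simp add: algebra_simps)
    have b1: "norm ((evL a L w - ev a w) * (evL a L w + ev a w)) \<le> tl a L * (2 * S a)"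
      if "summable (\<lambda>n. \<bar>a n\<bar>)" for a
    proof -
      have "norm ((evL a L w - ev a w) * (evL a L w + ev a w)) = norm (ev a w - evL a L w) * norm (evL a L w + ev a w)"
        by (simp add: norm_mult norm_minus_commute)
      also have "\<dots> \<le> tl a L * (2 * S a)"
      proof (rule mult_mono)
        show "norm (ev a w - evL a L w) \<le> tl a L" by (rule F3[OF that w])
        have "norm (evL a L w + ev a w) \<le> norm (evL a L w) + norm (ev a w)" by (rule norm_triangle_ineq)
        also have "\<dots> \<le> 2 * S a" using F1[OF that w, of L] F2[OF that w] by simp
        finally show "norm (evL a L w + ev a w) \<le> 2 * S a" .
        show "0 \<le> tl a L" unfolding tl_def by (intro suminf_nonneg) (use summable_iff_shift[of "\<lambda>n. \<bar>a n\<bar>" L] that in auto)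
      qed simp
      finally show ?thesis .
    qed
    have b2: "norm ((evL u L w - ev u w) * evL v L w + ev u w * (evL v L w - ev v w)) \<le> tl u L * S v + S u * tl v L"
    proof -
      have "norm ((evL u L w - ev u w) * evL v L w + ev u w * (evL v L w - ev v w))
          \<le> norm (ev u w - evL u L w) * norm (evL v L w) + norm (ev u w) * norm (ev v w - evL v L w)"
        by (metis (no_types, lifting) norm_minus_commute norm_mult norm_triangle_ineq)
      also have "\<dots> \<le> tl u L * S v + S u * tl v L"
      proof (intro add_mono mult_mono)
        show "norm (ev u w - evL u L w) \<le> tl u L" by (rule F3[OF su w])
        show "norm (evL v L w) \<le> S v" by (rule F1[OF sv w])
        show "norm (ev u w) \<le> S u" by (rule F2[OF su w])
        show "norm (ev v w - evL v L w) \<le> tl v L" by (rule F3[OF sv w])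
        show "0 \<le> tl u L" unfolding tl_def by (intro suminf_nonneg) (use summable_iff_shift[of "\<lambda>n. \<bar>u n\<bar>" L] su in auto)
        show "0 \<le> S u" unfolding S_def by (intro suminf_nonneg su) auto
      qed auto
      finally show ?thesis .
    qed
    have "norm (evL p L w * evL p L w - evL q L w * evL q L w - evL u L w * evL v L w)
       \<le> norm ((evL p L w - ev p w) * (evL p L w + ev p w)) + norm ((evL q L w - ev q w) * (evL q L w + ev q w))
        + norm ((evL u L w - ev u w) * evL v L w + ev u w * (evL v L w - ev v w))"
      unfolding e
      using norm_triangle_ineq4[of "(evL p L w - ev p w) * (evL p L w + ev p w) - (evL q L w - ev q w) * (evL q L w + ev q w)"
           "(evL u L w - ev u w) * evL v L w + ev u w * (evL v L w - ev v w)"]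
        norm_triangle_ineq4[of "(evL p L w - ev p w) * (evL p L w + ev p w)" "(evL q L w - ev q w) * (evL q L w + ev q w)"]
      by linarith
    also have "\<dots> \<le> tl p L * (2 * S p) + tl q L * (2 * S q) + (tl u L * S v + S u * tl v L)"
      by (intro add_mono b1 b2 sp sq)
    also have "\<dots> = \<delta> L" by (simp add: \<delta>_def algebra_simps)
    finally show ?thesis .
  qed
  have fin: "(\<Sum>n<L. (p n)^2) \<le> (\<Sum>n<L. (q n)^2) + sqrt (\<Sum>n<L. (u n)^2) * sqrt (\<Sum>n<L. (v n)^2) + \<delta> L"
    if L: "L > 0" for L
  proof -
    define w where "w j = cis (2*pi*real j/L)" for j :: nat
    have nw: "norm (w j) = 1" for j by (simp add: w_def)
    have P: "(\<Sum>j\<in>{..<L}. (cmod (evL a L (w j)))^2) = real L * (\<Sum>n<L. (a n)^2)" for a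
      unfolding evL_def w_def by (rule parseval[OF L])
    have each: "(cmod (evL p L (w j)))^2 \<le> (cmod (evL q L (w j)))^2 + cmod (evL u L (w j)) * cmod (evL v L (w j)) + \<delta> L" for j
    proof -
      have "(cmod (evL p L (w j)))^2 = cmod (evL p L (w j) * evL p L (w j))" by (simp add: norm_mult power2_eq_square)
      also have "\<dots> \<le> cmod (evL q L (w j) * evL q L (w j)) + cmod (evL u L (w j) * evL v L (w j))
          + norm (evL p L (w j) * evL p L (w j) - evL q L (w j) * evL q L (w j) - evL u L (w j) * evL v L (w j))"
      proof -
        let ?P = "evL p L (w j) * evL p L (w j)" and ?Q = "evL q L (w j) * evL q L (w j)" and ?U = "evL u L (w j) * evL v L (w j)"
        have "?P = ?Q + ?U + (?P - ?Q - ?U)" by simp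
        hence "cmod ?P = cmod (?Q + ?U + (?P - ?Q - ?U))" by simp
        also have "\<dots> \<le> cmod (?Q + ?U) + cmod (?P - ?Q - ?U)" by (rule norm_triangle_ineq)
        also have "\<dots> \<le> cmod ?Q + cmod ?U + cmod (?P - ?Q - ?U)" using norm_triangle_ineq[of ?Q ?U] by linarith
        finally show ?thesis .
      qed
      also have "\<dots> \<le> (cmod (evL q L (w j)))^2 + cmod (evL u L (w j)) * cmod (evL v L (w j)) + \<delta> L"
        using pt[OF nw, of L j] by (simp add: norm_mult power2_eq_square)
      finally show ?thesis .
    qed
    have cs: "(\<Sum>j<L. cmod (evL u L (w j)) * cmod (evL v L (w j)))
        \<le> sqrt (\<Sum>j<L. (cmod (evL u L (w j)))^2) * sqrt (\<Sum>j<L. (cmod (evL v L (w j)))^2)"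
    proof -
      have "(\<Sum>j<L. cmod (evL u L (w j)) * cmod (evL v L (w j)))^2
          \<le> (\<Sum>j<L. (cmod (evL u L (w j)))^2) * (\<Sum>j<L. (cmod (evL v L (w j)))^2)"
        by (rule Cauchy_Schwarz_ineq_sum)
      hence "sqrt ((\<Sum>j<L. cmod (evL u L (w j)) * cmod (evL v L (w j)))^2)
          \<le> sqrt ((\<Sum>j<L. (cmod (evL u L (w j)))^2) * (\<Sum>j<L. (cmod (evL v L (w j)))^2))"
        by (rule real_sqrt_le_mono)
      moreover have "(\<Sum>j<L. cmod (evL u L (w j)) * cmod (evL v L (w j))) \<ge> 0" by (intro sum_nonneg) auto
      ultimately show ?thesis by (simp add: real_sqrt_mult)
    qed
    have "real L * (\<Sum>n<L. (p n)^2) = (\<Sum>j<L. (cmod (evL p L (w j)))^2)" using P by simp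
    also have "\<dots> \<le> (\<Sum>j<L. (cmod (evL q L (w j)))^2 + cmod (evL u L (w j)) * cmod (evL v L (w j)) + \<delta> L)"
      by (intro sum_mono each)
    also have "\<dots> = (\<Sum>j<L. (cmod (evL q L (w j)))^2) + (\<Sum>j<L. cmod (evL u L (w j)) * cmod (evL v L (w j))) + real L * \<delta> L"
      by (simp add: sum.distrib)
    also have "\<dots> \<le> real L * (\<Sum>n<L. (q n)^2) + sqrt (real L * (\<Sum>n<L. (u n)^2)) * sqrt (real L * (\<Sum>n<L. (v n)^2)) + real L * \<delta> L"
      using cs P[of q] P[of u] P[of v] by simp
    also have "\<dots> = real L * ((\<Sum>n<L. (q n)^2) + sqrt (\<Sum>n<L. (u n)^2) * sqrt (\<Sum>n<L. (v n)^2) + \<delta> L)"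
      by (simp add: real_sqrt_mult algebra_simps)
    finally show ?thesis using L by simp
  qed
  have sq2: "summable (\<lambda>n. (a n)^2)" if "summable (\<lambda>n. \<bar>a n\<bar>)" for a :: "nat \<Rightarrow> real"
    by (rule summable_sq[OF that])
  have lim1: "(\<lambda>L. \<Sum>n<L. (p n)^2) \<longlonglongrightarrow> (\<Sum>n. (p n)^2)" by (intro summable_LIMSEQ sq2 sp)
  have lim2: "(\<lambda>L. (\<Sum>n<L. (q n)^2) + sqrt (\<Sum>n<L. (u n)^2) * sqrt (\<Sum>n<L. (v n)^2) + \<delta> L)
     \<longlonglongrightarrow> (\<Sum>n. (q n)^2) + sqrt (\<Sum>n. (u n)^2) * sqrt (\<Sum>n. (v n)^2) + 0"
    by (intro tendsto_intros summable_LIMSEQ sq2 sq su sv \<delta>0)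
  have "(\<Sum>n. (p n)^2) \<le> (\<Sum>n. (q n)^2) + sqrt (\<Sum>n. (u n)^2) * sqrt (\<Sum>n. (v n)^2) + 0"
    by (rule LIMSEQ_le[OF lim1 lim2]) (use fin in \<open>auto intro!: exI[of _ 1]\<close>)
  thus ?thesis by simp
qed

lemma Gf_eval:
  fixes x :: real
  shows "eval_fps (Abs_fps (\<lambda>n. if n < M then 1 else 0)) x = (\<Sum>n<M. x^n)"
  unfolding eval_fps_def by (subst suminf_finite[of "{..<M}"]) auto

lemma Gf_bounds:
  fixes x :: real assumes "0 \<le> x" "x \<le> 1"
  shows "real M * x^M \<le> (\<Sum>n<M. x^n)" "(\<Sum>n<M. x^n) \<le> real M"
proof -
  have "(\<Sum>n<M. x^M) \<le> (\<Sum>n<M. x^n)" by (intro sum_mono power_decreasing) (use assms in auto)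
  thus "real M * x^M \<le> (\<Sum>n<M. x^n)" by simp
  have "(\<Sum>n<M. x^n) \<le> (\<Sum>n<M. 1)" by (intro sum_mono power_le_one) (use assms in auto)
  thus "(\<Sum>n<M. x^n) \<le> real M" by simp
qed

lemma radius_ge1_mult:
  fixes f g :: "real fps"
  assumes "fps_conv_radius f \<ge> 1" "fps_conv_radius g \<ge> 1"
  shows "fps_conv_radius (f * g) \<ge> 1"
  using fps_conv_radius_mult[of f g] assms by (meson min.boundedI order.trans)

lemma abs_summable_fps:
  fixes f :: "real fps"
  assumes "fps_conv_radius f \<ge> 1" "0 \<le> s" "s < 1"
  shows "summable (\<lambda>n. \<bar>fps_nth f n * s^n\<bar>)"
  using norm_summable_fps[OF lt_radius[OF assms]] by simp

lemma conv_weight: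
  fixes f g :: "real fps"
  shows "(\<Sum>i\<le>n. (fps_nth f i * s^i) * (fps_nth g (n-i) * s^(n-i))) = fps_nth (f*g) n * s^n"
proof -
  have "(\<Sum>i\<le>n. (fps_nth f i * s^i) * (fps_nth g (n-i) * s^(n-i))) = (\<Sum>i\<le>n. fps_nth f i * fps_nth g (n-i) * s^n)"
  proof (rule sum.cong)
    fix i assume "i \<in> {..n}"
    hence "s^i * s^(n-i) = s^n" by (simp add: power_add[symmetric])
    thus "(fps_nth f i * s^i) * (fps_nth g (n-i) * s^(n-i)) = fps_nth f i * fps_nth g (n-i) * s^n"
      by (metis mult.assoc mult.left_commute)
  qed simp
  also have "\<dots> = fps_nth (f*g) n * s^n" by (simp add: fps_mult_nth atLeast0AtMost sum_distrib_right)
  finally show ?thesis .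
qed

lemma CORE_INEQ:
  fixes Xf Bf Ef :: "real fps" and ind :: "nat \<Rightarrow> nat"
  assumes X: "Xf = Abs_fps (\<lambda>n. real (ind n))"
    and id: "Xf * Xf = Bf * Bf + (1 - fps_X) * Ef"
    and rX: "fps_conv_radius Xf \<ge> 1" and rB: "fps_conv_radius Bf \<ge> 1" and rE: "fps_conv_radius Ef \<ge> 1"
    and s: "0 < s" "s < 1" and M: "M \<ge> 1"
  shows "real M * (s^2)^M * eval_fps Xf (s^2)
     \<le> real M * real M * eval_fps (Abs_fps (\<lambda>n. (fps_nth Bf n)^2)) (s^2)
        + sqrt (eval_fps (Abs_fps (\<lambda>n. (fps_nth Ef n)^2)) (s^2)) * sqrt (2 * real M)"
proof -
  define x where "x = s^2"
  have x: "0 < x" "x < 1" using s by (auto simp: x_def abs_square_less_1)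
  define Gf :: "real fps" where "Gf = Abs_fps (\<lambda>n. if n < M then 1 else 0)"
  define Cf where "Cf = Xf * Gf"
  define Df where "Df = Bf * Gf"
  define Hf where "Hf = (1 - fps_X) * Gf * Gf"
  define B2f where "B2f = Abs_fps (\<lambda>n. (fps_nth Bf n)^2)"
  define E2f where "E2f = Abs_fps (\<lambda>n. (fps_nth Ef n)^2)"
  have rG: "fps_conv_radius Gf \<ge> 1" unfolding Gf_def by (rule radius_bounded[where K=1]) auto
  have rC: "fps_conv_radius Cf \<ge> 1" unfolding Cf_def by (intro radius_ge1_mult rX rG)
  have rD: "fps_conv_radius Df \<ge> 1" unfolding Df_def by (intro radius_ge1_mult rB rG)
  have rH: "fps_conv_radius Hf \<ge> 1" unfolding Hf_def
    by (intro radius_ge1_mult rG radius_bounded[where K=1]) (auto)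
  have rB2: "fps_conv_radius B2f \<ge> 1" unfolding B2f_def by (rule radius_sq[OF rB])
  have rE2: "fps_conv_radius E2f \<ge> 1" unfolding E2f_def by (rule radius_sq[OF rE])
  have idC: "Cf * Cf = Df * Df + Ef * Hf"
  proof -
    have "Cf * Cf = (Xf * Xf) * (Gf * Gf)" unfolding Cf_def by (simp add: mult_ac)
    also have "\<dots> = (Bf * Bf + (1 - fps_X) * Ef) * (Gf * Gf)" by (simp only: id)
    also have "\<dots> = Df * Df + Ef * Hf" unfolding Df_def Hf_def by (simp add: algebra_simps)
    finally show ?thesis .
  qed
  have main: "(\<Sum>n. (fps_nth Cf n * s^n)^2) \<le> (\<Sum>n. (fps_nth Df n * s^n)^2)
      + sqrt (\<Sum>n. (fps_nth Ef n * s^n)^2) * sqrt (\<Sum>n. (fps_nth Hf n * s^n)^2)"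
  proof (rule ABS)
    show "summable (\<lambda>n. \<bar>fps_nth Cf n * s^n\<bar>)" by (rule abs_summable_fps[OF rC]) (use s in auto)
    show "summable (\<lambda>n. \<bar>fps_nth Df n * s^n\<bar>)" by (rule abs_summable_fps[OF rD]) (use s in auto)
    show "summable (\<lambda>n. \<bar>fps_nth Ef n * s^n\<bar>)" by (rule abs_summable_fps[OF rE]) (use s in auto)
    show "summable (\<lambda>n. \<bar>fps_nth Hf n * s^n\<bar>)" by (rule abs_summable_fps[OF rH]) (use s in auto)
    fix n
    show "(\<Sum>i\<le>n. (fps_nth Cf i * s^i) * (fps_nth Cf (n-i) * s^(n-i))) =
          (\<Sum>i\<le>n. (fps_nth Df i * s^i) * (fps_nth Df (n-i) * s^(n-i))) +
          (\<Sum>i\<le>n. (fps_nth Ef i * s^i) * (fps_nth Hf (n-i) * s^(n-i)))"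
      unfolding conv_weight idC by (simp add: algebra_simps)
  qed
  have sx: "(a * s^n)^2 = a^2 * x^n" for a n
    by (simp add: x_def power_mult_distrib power_mult[symmetric] mult.commute)
  have sumsq: "summable (\<lambda>n. (fps_nth F n * s^n)^2)" if "fps_conv_radius F \<ge> 1" for F
    by (rule summable_sq, rule abs_summable_fps[OF that]) (use s in auto)
  have sumF: "summable (\<lambda>n. fps_nth F n * x^n)" if "fps_conv_radius F \<ge> 1" for F
    by (rule summable_fps, rule lt_radius[OF that]) (use x in auto)
  have evG: "eval_fps Gf x = (\<Sum>n<M. x^n)" unfolding Gf_def by (rule Gf_eval)
  have evX0: "eval_fps Xf x \<ge> 0" unfolding eval_fps_def X by (intro suminf_nonneg) (use sumF[OF rX] x X in auto)
  have evB20: "eval_fps B2f x \<ge> 0" unfolding eval_fps_def B2f_def by (intro suminf_nonneg) (use sumF[OF rB2] x B2f_def in auto)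
  have evE20: "eval_fps E2f x \<ge> 0" unfolding eval_fps_def E2f_def by (intro suminf_nonneg) (use sumF[OF rE2] x E2f_def in auto)
  have Cnat: "fps_nth Cf n = real (\<Sum>i\<le>n. ind i * (if n - i < M then 1 else 0))" for n
    unfolding Cf_def X Gf_def by (auto simp: fps_mult_nth atLeast0AtMost of_nat_sum intro!: sum.cong)
  have a1: "eval_fps Cf x \<le> (\<Sum>n. (fps_nth Cf n * s^n)^2)"
    unfolding eval_fps_def
  proof (rule suminf_le)
    fix n
    obtain k :: nat where k: "fps_nth Cf n = real k" using Cnat by blast
    have "real k \<le> real k ^ 2" by (cases k) (auto simp: power2_eq_square)
    thus "fps_nth Cf n * x^n \<le> (fps_nth Cf n * s^n)^2" unfolding sx k using x
      by (intro mult_right_mono) auto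
  qed (use sumF[OF rC] sumsq[OF rC] in auto)
  have a2: "eval_fps Cf x = eval_fps Xf x * (\<Sum>n<M. x^n)"
    unfolding Cf_def evG[symmetric] by (rule eval_fps_mult; rule lt_radius) (use rX rG x in auto)
  have a3: "real M * x^M * eval_fps Xf x \<le> eval_fps Xf x * (\<Sum>n<M. x^n)"
    using mult_left_mono[OF Gf_bounds(1)[of x M] evX0] x by (simp add: mult.commute)
  have Dcoef: "(fps_nth Df n)^2 \<le> real M * fps_nth (B2f * Gf) n" for n
  proof -
    define g where "g i = (if i < M then 1 else (0::real))" for i
    have g2: "(g i)^2 = g i" for i by (simp add: g_def)
    have "fps_nth Df n = (\<Sum>i\<le>n. (fps_nth Bf i * g (n-i)) * g (n-i))"
      unfolding Df_def Gf_def g_def by (auto simp: fps_mult_nth atLeast0AtMost intro!: sum.cong)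
    hence "(fps_nth Df n)^2 \<le> (\<Sum>i\<le>n. (fps_nth Bf i * g (n-i))^2) * (\<Sum>i\<le>n. (g (n-i))^2)"
      using Cauchy_Schwarz_ineq_sum by metis
    also have "(\<Sum>i\<le>n. (fps_nth Bf i * g (n-i))^2) = fps_nth (B2f * Gf) n"
      unfolding B2f_def Gf_def g_def by (auto simp: fps_mult_nth atLeast0AtMost power_mult_distrib intro!: sum.cong)
    also have "(\<Sum>i\<le>n. (g (n-i))^2) \<le> real M"
    proof -
      have "(\<Sum>i\<le>n. (g (n-i))^2) = (\<Sum>i<Suc n. g (Suc n - Suc i))" by (simp add: g2 lessThan_Suc_atMost)
      also have "\<dots> = (\<Sum>i<Suc n. g i)" by (rule sum.nat_diff_reindex)
      also have "\<dots> = real (min (Suc n) M)"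
      proof -
        have "(\<Sum>i<k. g i) = real (min k M)" for k
          by (induction k) (auto simp: g_def min_def)
        thus ?thesis .
      qed
      also have "\<dots> \<le> real M" by simp
      finally show ?thesis .
    qed
    hence "fps_nth (B2f * Gf) n * (\<Sum>i\<le>n. (g (n-i))^2) \<le> fps_nth (B2f * Gf) n * real M"
      by (intro mult_left_mono) (auto simp: B2f_def Gf_def fps_mult_nth intro!: sum_nonneg)
    finally show ?thesis by (simp add: mult.commute)
  qed
  have b1: "(\<Sum>n. (fps_nth Df n * s^n)^2) \<le> real M * eval_fps (B2f * Gf) x"
  proof -
    have "(\<Sum>n. (fps_nth Df n * s^n)^2) \<le> (\<Sum>n. real M * (fps_nth (B2f * Gf) n * x^n))"
    proof (rule suminf_le)
      fix n show "(fps_nth Df n * s^n)^2 \<le> real M * (fps_nth (B2f * Gf) n * x^n)"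
        unfolding sx using mult_right_mono[OF Dcoef[of n], of "x^n"] x by (simp add: algebra_simps)
    qed (use sumsq[OF rD] sumF[OF radius_ge1_mult[OF rB2 rG]] in \<open>auto intro: summable_mult\<close>)
    also have "\<dots> = real M * eval_fps (B2f * Gf) x"
      unfolding eval_fps_def by (rule suminf_mult[OF sumF[OF radius_ge1_mult[OF rB2 rG]]])
    finally show ?thesis .
  qed
  have b2: "eval_fps (B2f * Gf) x \<le> eval_fps B2f x * real M"
  proof -
    have "eval_fps (B2f * Gf) x = eval_fps B2f x * (\<Sum>n<M. x^n)"
      unfolding evG[symmetric] by (rule eval_fps_mult; rule lt_radius) (use rB2 rG x in auto)
    also have "\<dots> \<le> eval_fps B2f x * real M" by (intro mult_left_mono Gf_bounds evB20) (use x in auto)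
    finally show ?thesis .
  qed
  have GX: "(1 - fps_X) * Gf = 1 - fps_X ^ M"
  proof (rule fps_ext)
    fix n
    show "fps_nth ((1 - fps_X) * Gf) n = fps_nth (1 - fps_X ^ M) n"
      using M unfolding Gf_def by (cases n) (auto simp: algebra_simps)
  qed
  have Hcoef: "fps_nth Hf n = (if n < M then 1 else 0) - (if n < M then 0 else (if n - M < M then 1 else 0))" for n
    unfolding Hf_def GX by (simp add: algebra_simps fps_X_power_mult_nth Gf_def)
  have c1: "(\<Sum>n. (fps_nth Hf n * s^n)^2) \<le> 2 * real M"
  proof -
    have "(\<Sum>n. (fps_nth Hf n * s^n)^2) = (\<Sum>n<2*M. (fps_nth Hf n * s^n)^2)"
      by (rule suminf_finite) (auto simp: Hcoef)
    also have "\<dots> \<le> (\<Sum>n<2*M. 1)"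
    proof (rule sum_mono)
      fix n
      have h: "\<bar>fps_nth Hf n\<bar> \<le> 1" by (simp add: Hcoef)
      have "\<bar>fps_nth Hf n * s^n\<bar> \<le> 1 * 1"
        unfolding abs_mult by (intro mult_mono h) (use s in \<open>auto simp: power_le_one\<close>)
      hence "\<bar>fps_nth Hf n * s^n\<bar>^2 \<le> 1" by (intro power_le_one) auto
      thus "(fps_nth Hf n * s^n)^2 \<le> 1" by simp
    qed
    finally show ?thesis by simp
  qed
  have d1: "(\<Sum>n. (fps_nth Ef n * s^n)^2) = eval_fps E2f x"
    unfolding eval_fps_def E2f_def sx by simp
  have "real M * x^M * eval_fps Xf x \<le> (\<Sum>n. (fps_nth Cf n * s^n)^2)"
    using a1 a2 a3 by linarith
  also have "\<dots> \<le> real M * (eval_fps B2f x * real M) + sqrt (eval_fps E2f x) * sqrt (2 * real M)"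
  proof -
    have "sqrt (\<Sum>n. (fps_nth Hf n * s^n)^2) \<le> sqrt (2 * real M)" using c1 by simp
    hence "sqrt (\<Sum>n. (fps_nth Ef n * s^n)^2) * sqrt (\<Sum>n. (fps_nth Hf n * s^n)^2)
        \<le> sqrt (eval_fps E2f x) * sqrt (2 * real M)" unfolding d1 using evE20 by (intro mult_left_mono) auto
    moreover have "real M * eval_fps (B2f * Gf) x \<le> real M * (eval_fps B2f x * real M)"
      by (intro mult_left_mono b2) auto
    ultimately show ?thesis using main b1 by linarith
  qed
  finally show ?thesis unfolding x_def B2f_def E2f_def by (simp add: algebra_simps)
qed

lemma FINAL:
  fixes Fx Bv B2x E2x Ex x \<delta> :: real
  assumes x: "0 < x" "x < 1"
    and core: "\<And>M. M \<ge> 1 \<Longrightarrow> real M * x^M * Fx \<le> real M * real M * B2x + sqrt E2x * sqrt (2 * real M)"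
    and Fid: "Fx^2 = Bv^2 + (1-x)*Ex" and F0: "Fx \<ge> 0"
    and cs1: "Ex^2 \<le> E2x / (1-x)"
    and cs2: "Bv^2 \<le> B2x / (1-x)"
    and B2pos: "B2x > 0" and E20: "E2x \<ge> 0"
    and b2: "B2x \<le> \<delta> * Bv"
    and prod: "E2x * B2x \<le> \<delta>*(1-\<delta>)^2/16 * Bv^3"
    and \<delta>: "0 < \<delta>" "\<delta> < 1"
    and big: "Bv > 4/(1-\<delta>)" "Bv \<ge> 1"
  shows False
proof -
  define \<epsilon> where "\<epsilon> = \<delta>*(1-\<delta>)^2/16"
  have \<epsilon>0: "0 \<le> \<epsilon>" using \<delta> by (simp add: \<epsilon>_def)
  have "(1-\<delta>)^2 \<le> 1" using \<delta> by (simp add: abs_le_square_iff power_le_one)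
  hence "\<delta>*(1-\<delta>)^2 \<le> 1 * 1" using \<delta> by (intro mult_mono) auto
  hence \<epsilon>1: "\<epsilon> \<le> 1" by (simp add: \<epsilon>_def)
  have Bv0: "Bv > 0" using big by simp
  have x1: "0 < 1 - x" using x by simp
  define y where "y = \<delta> * Bv / B2x"
  have y1: "y \<ge> 1" using b2 B2pos by (simp add: y_def field_simps)
  define M where "M = nat \<lfloor>y\<rfloor>"
  have M1: "M \<ge> 1" using y1 by (simp add: M_def le_nat_iff)
  have My: "real M \<le> y" using y1 by (simp add: M_def)
  have My2: "y / 2 \<le> real M"
  proof -
    have "y - 1 < real M" using y1 by (simp add: M_def)
    moreover have "1 \<le> real M" using M1 by simp
    ultimately show ?thesis by linarith
  qed
  have M0: "real M > 0" using M1 by simp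
  have i: "real M * B2x \<le> \<delta> * Bv"
  proof -
    have "real M * B2x \<le> y * B2x" using My B2pos by (intro mult_right_mono) auto
    also have "\<dots> = \<delta> * Bv" using B2pos by (simp add: y_def)
    finally show ?thesis .
  qed
  have ii: "sqrt E2x * sqrt (2 * real M) \<le> real M * ((1-\<delta>) * Bv / 2)"
  proof -
    have "2 * E2x * B2x \<le> 2 * (\<epsilon> * Bv^3)" using prod unfolding \<epsilon>_def by linarith
    also have "\<dots> = (y / 2) * ((1-\<delta>)^2 * Bv^2 / 4) * B2x"
      using B2pos by (simp add: y_def \<epsilon>_def field_simps power2_eq_square power3_eq_cube)
    also have "\<dots> \<le> real M * ((1-\<delta>)^2 * Bv^2 / 4) * B2x"
      using My2 B2pos by (intro mult_right_mono) auto
    finally have "2 * E2x \<le> real M * ((1-\<delta>)^2 * Bv^2 / 4)" using B2pos by simp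
    hence "real M * (2 * E2x) \<le> real M * (real M * ((1-\<delta>)^2 * Bv^2 / 4))"
      using M0 by (intro mult_left_mono) auto
    also have "\<dots> = (real M * ((1-\<delta>) * Bv / 2))^2"
      by (simp add: power_mult_distrib power_divide power2_eq_square mult_ac)
    finally have "2 * real M * E2x \<le> (real M * ((1-\<delta>) * Bv / 2))^2" by (simp add: mult_ac)
    hence "sqrt (2 * real M * E2x) \<le> sqrt ((real M * ((1-\<delta>) * Bv / 2))^2)"
      by (rule real_sqrt_le_mono)
    also have "\<dots> = real M * ((1-\<delta>) * Bv / 2)" using M0 \<delta> Bv0 by simp
    finally show ?thesis by (simp add: real_sqrt_mult mult_ac)
  qed
  have up: "x^M * Fx \<le> \<delta> * Bv + (1-\<delta>) * Bv / 2"
  proof -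
    have "real M * (x^M * Fx) \<le> real M * real M * B2x + real M * ((1-\<delta>) * Bv / 2)"
      using core[OF M1] ii by (simp add: mult_ac)
    also have "\<dots> \<le> real M * (\<delta> * Bv) + real M * ((1-\<delta>) * Bv / 2)"
      using i M0 by (simp add: mult.assoc)
    finally have "real M * (x^M * Fx) \<le> real M * (\<delta> * Bv + (1-\<delta>) * Bv / 2)" by (simp add: algebra_simps)
    thus ?thesis using M0 by simp
  qed
  have c2: "(1-x) * Bv \<le> B2x / Bv"
  proof -
    have "(1-x) * Bv^2 \<le> B2x" using cs2 x1 by (simp add: field_simps)
    thus ?thesis using Bv0 by (simp add: field_simps power2_eq_square)
  qed
  have iii: "x^M \<ge> 1 - 1/Bv"
  proof -
    have "1 + real M * (-(1-x)) \<le> (1 + (-(1-x)))^M" by (rule Bernoulli_inequality) (use x in auto)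
    hence b: "1 - real M * (1-x) \<le> x^M" by (simp add: algebra_simps)
    have "real M * (1-x) \<le> y * (1-x)" using My x1 by (intro mult_right_mono) auto
    also have "\<dots> = \<delta> * ((1-x) * Bv) / B2x" by (simp add: y_def)
    also have "\<dots> \<le> \<delta> * (B2x / Bv) / B2x" using c2 \<delta> B2pos by (intro divide_right_mono mult_left_mono) auto
    also have "\<dots> = \<delta> / Bv" using B2pos by simp
    also have "\<dots> \<le> 1 / Bv" using \<delta> Bv0 by (simp add: divide_right_mono)
    finally show ?thesis using b by linarith
  qed
  have iv: "Fx \<ge> Bv - 1"
  proof -
    have "((1-x) * Ex)^2 = (1-x)^2 * Ex^2" by (simp add: power_mult_distrib)
    also have "\<dots> \<le> (1-x)^2 * (E2x / (1-x))" using cs1 by (intro mult_left_mono) auto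
    also have "\<dots> = (1-x) * E2x" using x1 by (simp add: power2_eq_square field_simps)
    also have "\<dots> \<le> Bv^2"
    proof -
      have "(1-x) * E2x * B2x \<le> (1-x) * (\<epsilon> * Bv^3)" using prod x1 by (simp add: \<epsilon>_def mult.assoc mult_left_mono)
      also have "\<dots> = \<epsilon> * Bv^2 * ((1-x) * Bv)" by (simp add: power2_eq_square power3_eq_cube mult_ac)
      also have "\<dots> \<le> \<epsilon> * Bv^2 * (B2x / Bv)" using c2 \<epsilon>0 by (intro mult_left_mono) auto
      also have "\<dots> = \<epsilon> * Bv * B2x" using Bv0 by (simp add: power2_eq_square field_simps)
      finally have "(1-x) * E2x \<le> \<epsilon> * Bv" using B2pos by (simp add: mult_ac)
      also have "\<dots> \<le> 1 * Bv" using \<epsilon>1 Bv0 by (intro mult_right_mono) auto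
      also have "\<dots> \<le> Bv^2" using big by (simp add: power2_eq_square)
      finally show ?thesis .
    qed
    finally have "((1-x) * Ex)^2 \<le> Bv^2" .
    hence "\<bar>(1-x) * Ex\<bar> \<le> \<bar>Bv\<bar>" by (simp add: abs_le_square_iff)
    hence "(1-x) * Ex \<ge> - Bv" using Bv0 by linarith
    hence "Fx^2 \<ge> Bv^2 - Bv" using Fid by linarith
    moreover have "Bv^2 - Bv \<ge> (Bv - 1)^2" using big by (simp add: power2_eq_square algebra_simps)
    ultimately have "(Bv - 1)^2 \<le> Fx^2" by linarith
    thus ?thesis using F0 big by (simp add: abs_le_square_iff)
  qed
  have "(1 - 1/Bv) * (Bv - 1) \<le> x^M * Fx"
    using iii iv big x by (intro mult_mono) (auto simp: field_simps)
  also have "\<dots> \<le> \<delta> * Bv + (1-\<delta>) * Bv / 2" by (rule up)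
  finally have "(1 - 1/Bv) * (Bv - 1) \<le> \<delta> * Bv + (1-\<delta>) * Bv / 2" .
  moreover have "(1 - 1/Bv) * (Bv - 1) = Bv - 2 + 1/Bv" using Bv0 by (simp add: field_simps)
  moreover have "1/Bv > 0" using Bv0 by simp
  ultimately have "Bv - 2 < \<delta> * Bv + (1-\<delta>) * Bv / 2" by linarith
  moreover have "(1-\<delta>) * Bv / 2 = Bv/2 - \<delta> * Bv / 2" by (simp add: diff_divide_distrib left_diff_distrib)
  moreover have "(1-\<delta>) * Bv = Bv - \<delta> * Bv" by (simp add: algebra_simps)
  ultimately have "(1-\<delta>) * Bv < 4" by linarith
  hence "Bv * (1-\<delta>) < 4" by (simp add: mult.commute)
  hence "Bv < 4/(1-\<delta>)" using \<delta> by (simp add: pos_less_divide_eq)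
  thus False using big by simp
qed

lemma doubling:
  fixes g :: "nat \<Rightarrow> real" and s D :: real
  assumes mono: "\<And>i j. J0 \<le> i \<Longrightarrow> i \<le> j \<Longrightarrow> g i \<le> g j"
    and dbl: "\<And>n. J0 \<le> n \<Longrightarrow> g (2*n) \<le> D * g n"
    and g0: "\<And>n. J0 \<le> n \<Longrightarrow> 0 \<le> g n"
    and s: "0 < s" "s < 1" and sN: "s^N * D = 1" and NJ: "J0 \<le> N" and N0: "N > 0"
  shows "J0 \<le> j \<Longrightarrow> g j * s^j \<le> D * g N"
proof (induction j rule: less_induct)
  case (less j)
  show ?case
  proof (cases "j < 2*N")
    case True
    have "g j * s^j \<le> g j * 1" using g0[OF less.prems] s by (intro mult_left_mono power_le_one) auto
    also have "\<dots> \<le> g (2*N)" using mono[OF less.prems, of "2*N"] True by simp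
    also have "\<dots> \<le> D * g N" by (rule dbl[OF NJ])
    finally show ?thesis .
  next
    case False
    define j' where "j' = (j+1) div 2"
    have j'N: "N \<le> j'" using False by (simp add: j'_def)
    have j'j: "j' < j" using False N0 by (simp add: j'_def)
    have jj': "j \<le> 2*j'" by (simp add: j'_def)
    have jmj: "N \<le> j - j'" using False by (simp add: j'_def)
    have J0j': "J0 \<le> j'" using NJ j'N by simp
    have "g j \<le> g (2*j')" using mono[OF less.prems jj'] .
    also have "\<dots> \<le> D * g j'" by (rule dbl[OF J0j'])
    finally have gj: "g j \<le> D * g j'" .
    have "s^j = s^j' * s^(j-j')" using j'j by (simp add: power_add[symmetric])
    also have "\<dots> \<le> s^j' * s^N" using s jmj by (intro mult_left_mono power_decreasing) auto
    finally have sj: "s^j \<le> s^j' * s^N" .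
    have "g j * s^j \<le> (D * g j') * (s^j' * s^N)"
      using gj sj g0[OF less.prems] s by (intro mult_mono) auto
    also have "\<dots> = g j' * s^j' * (s^N * D)" by (simp add: mult_ac)
    also have "\<dots> = g j' * s^j'" using sN by simp
    also have "\<dots> \<le> D * g N" by (rule less.IH[OF j'j J0j'])
    finally show ?thesis .
  qed
qed

lemma G1_sums:
  fixes y :: real assumes "0 \<le> y" "y < 1"
  shows "(\<lambda>n. (real n + 1) * y^n) sums (1/(1-y)^2)"
proof -
  define G1 :: "real fps" where "G1 = Abs_fps (\<lambda>_. 1)"
  have r: "fps_conv_radius G1 \<ge> 1" unfolding G1_def by (rule radius_bounded[where K=1]) auto
  have ny: "norm y < fps_conv_radius G1" by (rule lt_radius[OF r assms])
  have nyy: "norm y < fps_conv_radius (G1 * G1)"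
    using lt_radius[OF radius_ge1_mult[OF r r] assms] by simp
  have eG: "eval_fps G1 y = 1/(1-y)"
    unfolding eval_fps_def G1_def using geometric_sums[of y] assms by (simp add: sums_iff)
  have "eval_fps (G1 * G1) y = 1/(1-y)^2"
    using eval_fps_mult[OF ny ny] eG by (simp add: power2_eq_square)
  moreover have "fps_nth (G1 * G1) n = real n + 1" for n by (simp add: G1_def fps_mult_nth)
  ultimately show ?thesis using sums_eval_fps[OF nyy] by simp
qed


lemma PROD:
  fixes E2s B2s :: "nat \<Rightarrow> real" and s c K :: real
  assumes mE: "\<And>i j. i \<le> j \<Longrightarrow> E2s i \<le> E2s j" and mB: "\<And>i j. i \<le> j \<Longrightarrow> B2s i \<le> B2s j"
    and E0: "\<And>i. E2s i \<ge> 0" and B0: "\<And>i. B2s i \<ge> 0"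
    and phi1: "\<And>m. m < J0 \<Longrightarrow> E2s m * B2s m \<le> K"
    and phi2: "\<And>m. J0 \<le> m \<Longrightarrow> E2s m * B2s m * s^m \<le> c"
    and K0: "K \<ge> 0" and c0: "c \<ge> 0" and s: "0 < s" "s < 1"
    and rE: "fps_conv_radius (Abs_fps E2s) \<ge> 1" and rB: "fps_conv_radius (Abs_fps B2s) \<ge> 1"
  shows "(1 - s^2)^2 * eval_fps (Abs_fps E2s * Abs_fps B2s) (s^2) \<le> K + 4*c"
proof -
  define x where "x = s^2"
  have x: "0 < x" "x < 1" using s by (auto simp: x_def abs_square_less_1)
  have rEB: "fps_conv_radius (Abs_fps E2s * Abs_fps B2s) \<ge> 1" by (rule radius_ge1_mult[OF rE rB])
  have trm: "E2s i * B2s (n-i) * x^n \<le> K * x^n + c * s^n" if "i \<le> n" for i n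
  proof -
    define m where "m = max i (n-i)"
    have mn: "m \<le> n" using that by (simp add: m_def)
    have "E2s i * B2s (n-i) \<le> E2s m * B2s m"
      using mE[of i m] mB[of "n-i" m] E0 B0 by (intro mult_mono) (auto simp: m_def)
    hence "E2s i * B2s (n-i) * x^n \<le> E2s m * B2s m * x^n" using x by (intro mult_right_mono) auto
    also have "\<dots> \<le> K * x^n + c * s^n"
    proof (cases "m < J0")
      case True
      have "E2s m * B2s m * x^n \<le> K * x^n" using phi1[OF True] x by (intro mult_right_mono) auto
      thus ?thesis using c0 s by (smt (verit) mult_nonneg_nonneg zero_le_power)
    next
      case False
      have "x^n = s^n * s^n" by (simp add: x_def power_mult[symmetric] power_add[symmetric] mult_2[symmetric] mult.commute)
      hence "E2s m * B2s m * x^n = E2s m * B2s m * s^n * s^n" by simp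
      also have "\<dots> \<le> E2s m * B2s m * s^m * s^n"
        using E0[of m] B0[of m] s mn by (intro mult_right_mono mult_left_mono power_decreasing) auto
      also have "\<dots> \<le> c * s^n" using phi2[of m] False s by (intro mult_right_mono) auto
      finally show ?thesis using K0 x by (smt (verit) mult_nonneg_nonneg zero_le_power)
    qed
    finally show ?thesis .
  qed
  have coef: "fps_nth (Abs_fps E2s * Abs_fps B2s) n * x^n \<le> K * ((real n + 1) * x^n) + c * ((real n + 1) * s^n)" for n
  proof -
    have "fps_nth (Abs_fps E2s * Abs_fps B2s) n * x^n = (\<Sum>i\<le>n. E2s i * B2s (n-i) * x^n)"
      by (simp add: fps_mult_nth atLeast0AtMost sum_distrib_right)
    also have "\<dots> \<le> (\<Sum>i\<le>n. K * x^n + c * s^n)" by (intro sum_mono trm) auto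
    also have "\<dots> = K * ((real n + 1) * x^n) + c * ((real n + 1) * s^n)" by (simp add: algebra_simps)
    finally show ?thesis .
  qed
  have S1: "(\<lambda>n. (real n + 1) * x^n) sums (1/(1-x)^2)" by (rule G1_sums) (use x in auto)
  have S2: "(\<lambda>n. (real n + 1) * s^n) sums (1/(1-s)^2)" by (rule G1_sums) (use s in auto)
  have "eval_fps (Abs_fps E2s * Abs_fps B2s) x \<le> (\<Sum>n. K * ((real n + 1) * x^n) + c * ((real n + 1) * s^n))"
    unfolding eval_fps_def
  proof (rule suminf_le)
    show "summable (\<lambda>n. fps_nth (Abs_fps E2s * Abs_fps B2s) n * x^n)"
      by (rule summable_fps, rule lt_radius[OF rEB]) (use x in auto)
    show "summable (\<lambda>n. K * ((real n + 1) * x^n) + c * ((real n + 1) * s^n))"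
      using S1 S2 by (intro summable_add summable_mult) (auto simp: sums_iff)
  qed (rule coef)
  also have "\<dots> = K * (1/(1-x)^2) + c * (1/(1-s)^2)"
    using sums_add[OF sums_mult[OF S1, of K] sums_mult[OF S2, of c]] by (simp add: sums_iff)
  finally have ev: "eval_fps (Abs_fps E2s * Abs_fps B2s) x \<le> K * (1/(1-x)^2) + c * (1/(1-s)^2)" .
  have "(1-x)^2 * eval_fps (Abs_fps E2s * Abs_fps B2s) x \<le> (1-x)^2 * (K * (1/(1-x)^2) + c * (1/(1-s)^2))"
    using ev by (intro mult_left_mono) auto
  also have "\<dots> = K + c * (1+s)^2"
  proof -
    have hx: "1 - x = (1-s)*(1+s)" by (simp add: x_def power2_eq_square algebra_simps)
    have h1: "(1-x)/(1-s) = 1+s" using s unfolding hx by simp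
    have e1: "(1-x)^2 * (K * (1/(1-x)^2)) = K" using x by simp
    have e2: "(1-x)^2 * (c * (1/(1-s)^2)) = c * ((1-x)/(1-s))^2" by (simp add: power_divide)
    show ?thesis unfolding distrib_left e1 e2 h1 ..
  qed
  also have "\<dots> \<le> K + c * 4"
  proof -
    have "(1+s)^2 \<le> 2^2" using s by (intro power_mono) auto
    thus ?thesis using c0 by (intro add_left_mono mult_left_mono) auto
  qed
  finally show ?thesis by (simp add: x_def mult.commute)
qed

lemma CSx:
  fixes F :: "real fps"
  assumes r: "fps_conv_radius F \<ge> 1" and s: "0 < s" "s < 1"
  shows "(eval_fps F (s^2))^2 \<le> eval_fps (Abs_fps (\<lambda>n. (fps_nth F n)^2)) (s^2) / (1 - s^2)"
proof -
  define x where "x = s^2"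
  have x: "0 < x" "x < 1" using s by (auto simp: x_def abs_square_less_1)
  have sx: "(a * s^n)^2 = a^2 * x^n" for a n
    by (simp add: x_def power_mult_distrib power_mult[symmetric] mult.commute)
  have sx2: "(s^n)^2 = x^n" for n using sx[of 1 n] by simp
  have sx3: "(a * s^n) * s^n = a * x^n" for a n
    using sx2[of n] by (simp add: power2_eq_square mult_ac)
  have A: "summable (\<lambda>n. (fps_nth F n * s^n)^2)"
    by (rule summable_sq, rule abs_summable_fps[OF r]) (use s in auto)
  have B: "summable (\<lambda>n. (s^n)^2)" unfolding sx2 using x by (intro summable_geometric) auto
  have "(\<Sum>n. (fps_nth F n * s^n) * s^n)^2 \<le> (\<Sum>n. (fps_nth F n * s^n)^2) * (\<Sum>n. (s^n)^2)"
    by (rule CS_series(2)[OF A B])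
  moreover have "(\<Sum>n. (fps_nth F n * s^n) * s^n) = eval_fps F x" unfolding eval_fps_def sx3 ..
  moreover have "(\<Sum>n. (fps_nth F n * s^n)^2) = eval_fps (Abs_fps (\<lambda>n. (fps_nth F n)^2)) x"
    unfolding eval_fps_def sx by simp
  moreover have "(\<Sum>n. (s^n)^2) = 1/(1-x)" unfolding sx2 using x by (simp add: suminf_geometric)
  ultimately show ?thesis by (simp add: x_def)
qed

lemma B2_bound:
  fixes b :: "nat \<Rightarrow> real" and \<beta> x :: real
  assumes b: "\<And>n. n \<ge> n0 \<Longrightarrow> 0 < b n \<and> b n < \<beta>" and x: "0 \<le> x" "x \<le> 1"
    and s1: "summable (\<lambda>n. b n * x^n)" and s2: "summable (\<lambda>n. (b n)^2 * x^n)"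
  shows "(\<Sum>n. (b n)^2 * x^n) \<le> \<beta> * (\<Sum>n. b n * x^n) + (\<Sum>n<n0. \<bar>(b n)^2 - \<beta> * b n\<bar>)"
proof -
  define k where "k n = (if n < n0 then \<bar>(b n)^2 - \<beta> * b n\<bar> else 0)" for n
  have sk: "(\<Sum>n. k n) = (\<Sum>n<n0. \<bar>(b n)^2 - \<beta> * b n\<bar>)"
    by (subst suminf_finite[of "{..<n0}"]) (auto simp: k_def)
  have skk: "summable k" by (rule summable_finite[of "{..<n0}"]) (auto simp: k_def)
  have "(\<Sum>n. (b n)^2 * x^n) \<le> (\<Sum>n. \<beta> * (b n * x^n) + k n)"
  proof (rule suminf_le)
    fix n
    show "(b n)^2 * x^n \<le> \<beta> * (b n * x^n) + k n"
    proof (cases "n < n0")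
      case True
      have "((b n)^2 - \<beta> * b n) * x^n \<le> \<bar>(b n)^2 - \<beta> * b n\<bar> * 1"
        using x by (intro mult_mono power_le_one) auto
      thus ?thesis using True by (simp add: k_def algebra_simps)
    next
      case False
      hence "b n * b n \<le> \<beta> * b n" using b[of n] by (intro mult_right_mono) auto
      hence "(b n)^2 * x^n \<le> (\<beta> * b n) * x^n" using x by (intro mult_right_mono) (auto simp: power2_eq_square)
      thus ?thesis using False by (simp add: k_def mult_ac)
    qed
  qed (use s2 s1 skk in \<open>auto intro: summable_add summable_mult\<close>)
  also have "\<dots> = \<beta> * (\<Sum>n. b n * x^n) + (\<Sum>n. k n)"
    using suminf_add[OF summable_mult[OF s1, of \<beta>] skk] suminf_mult[OF s1, of \<beta>] by simp
  finally show ?thesis unfolding sk .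
qed

lemma Bv_lower:
  fixes b :: "nat \<Rightarrow> real" and x :: real
  assumes b: "\<And>n. n \<ge> n0 \<Longrightarrow> 0 < b n" and x: "0 \<le> x" "x \<le> 1"
    and s1: "summable (\<lambda>n. b n * x^n)" and N: "n0 \<le> N"
  shows "(\<Sum>n. b n * x^n) \<ge> x^N * (\<Sum>k\<le>N. b k) - 2 * (\<Sum>n<n0. \<bar>b n\<bar>)"
proof -
  have "(\<Sum>n\<le>N. b n * x^n) \<le> (\<Sum>n. b n * x^n)"
  proof (rule sum_le_suminf[OF s1])
    fix n assume "n \<in> - {..N}"
    hence "n0 \<le> n" using N by auto
    thus "0 \<le> b n * x^n" using b[of n] x by simp
  qed simp
  moreover have "(\<Sum>n\<le>N. x^N * b n - (if n < n0 then 2 * \<bar>b n\<bar> else 0)) \<le> (\<Sum>n\<le>N. b n * x^n)"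
  proof (rule sum_mono)
    fix n assume n: "n \<in> {..N}"
    show "x^N * b n - (if n < n0 then 2 * \<bar>b n\<bar> else 0) \<le> b n * x^n"
    proof (cases "n < n0")
      case True
      have "\<bar>x^N * b n\<bar> \<le> 1 * \<bar>b n\<bar>" unfolding abs_mult using x by (intro mult_right_mono) (auto simp: power_le_one)
      moreover have "\<bar>b n * x^n\<bar> \<le> \<bar>b n\<bar> * 1" unfolding abs_mult using x by (intro mult_left_mono) (auto simp: power_le_one)
      ultimately show ?thesis using True by (simp add: abs_le_iff)
    next
      case False
      have "x^N \<le> x^n" using n x by (intro power_decreasing) auto
      hence "x^N * b n \<le> x^n * b n" using b[of n] False by (intro mult_right_mono) auto
      thus ?thesis using False by (simp add: mult.commute)
    qed
  qed
  moreover have "(\<Sum>n\<le>N. x^N * b n - (if n < n0 then 2 * \<bar>b n\<bar> else 0)) = x^N * (\<Sum>k\<le>N. b k) - 2 * (\<Sum>n<n0. \<bar>b n\<bar>)"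
  proof -
    have "(\<Sum>n\<le>N. (if n < n0 then 2 * \<bar>b n\<bar> else 0)) = (\<Sum>n\<in>{n\<in>{..N}. n < n0}. 2 * \<bar>b n\<bar>)"
      by (rule sum.inter_filter[symmetric]) simp
    also have "{n\<in>{..N}. n < n0} = {..<n0}" using N by auto
    finally show ?thesis by (simp add: sum_subtractf sum_distrib_left)
  qed
  ultimately show ?thesis by linarith
qed

lemma R_eq:
  "real (R A n) = (\<Sum>k\<le>n. real (if k \<in> A then 1 else 0::nat) * real (if n - k \<in> A then 1 else 0::nat))"
proof -
  have S: "{(a, a'). a \<in> A \<and> a' \<in> A \<and> a + a' = n} = (\<lambda>k. (k, n - k)) ` {k\<in>{..n}. k \<in> A \<and> n - k \<in> A}"
    by (auto simp: image_def)
  have "R A n = card {k\<in>{..n}. k \<in> A \<and> n - k \<in> A}"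
    unfolding R_def S by (rule card_image) (auto simp: inj_on_def)
  also have "\<dots> = (\<Sum>k\<in>{k\<in>{..n}. k \<in> A \<and> n - k \<in> A}. 1::nat)"
    by (rule card_eq_sum)
  also have "\<dots> = (\<Sum>k\<le>n. (if k \<in> A \<and> n - k \<in> A then 1 else 0::nat))"
    by (rule sum.inter_filter) simp
  finally show ?thesis by (auto simp: of_nat_sum intro!: sum.cong)
qed

lemma mono_from:
  fixes f :: "nat \<Rightarrow> real"
  assumes "\<And>n. n \<ge> n0 \<Longrightarrow> f (Suc n) \<ge> f n" "n0 \<le> i" "i \<le> j"
  shows "f i \<le> f j"
  using assms(3)
proof (induction j rule: dec_induct)
  case (step n) thus ?case using assms(1)[of n] assms(2) by simp
qed simp

theorem theorem3:
  fixes b e :: "nat \<Rightarrow> real"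
  assumes h1: "eventually (\<lambda>n. b n > 0) sequentially"
    and h2: "\<exists>C. eventually (\<lambda>n. (\<Sum>k\<le>2*n. b k) / (\<Sum>k\<le>n. b k) < C) sequentially"
    and h3: "limsup (\<lambda>n. ereal (b n)) < 1"
    and h4: "((\<lambda>n. (\<Sum>k\<le>n. (b k)\<^sup>2) * (\<Sum>k\<le>n. (e k)\<^sup>2) / (\<Sum>k\<le>n. b k) ^ 3)
               \<longlongrightarrow> 0) sequentially"
  shows "\<not> (\<exists>A :: nat set. \<forall>N. (\<Sum>n\<le>N. real (R A n))
            = (\<Sum>n\<le>N. \<Sum>k\<le>n. b k * b (n - k)) + e N)"
proof
  assume "\<exists>A :: nat set. \<forall>N. (\<Sum>n\<le>N. real (R A n)) = (\<Sum>n\<le>N. \<Sum>k\<le>n. b k * b (n - k)) + e N"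
  then obtain A :: "nat set" where hA: "\<And>N. (\<Sum>n\<le>N. real (R A n)) = (\<Sum>n\<le>N. \<Sum>k\<le>n. b k * b (n - k)) + e N"
    by blast
  define ind where "ind n = (if n \<in> A then 1 else 0::nat)" for n
  define Xf :: "real fps" where "Xf = Abs_fps (\<lambda>n. real (ind n))"
  define Bf :: "real fps" where "Bf = Abs_fps b"
  define Ef :: "real fps" where "Ef = Abs_fps e"
  define G1 :: "real fps" where "G1 = Abs_fps (\<lambda>_. 1)"
  define Bs where "Bs N = (\<Sum>k\<le>N. b k)" for N
  define B2s where "B2s N = (\<Sum>k\<le>N. (b k)^2)" for N
  define E2s where "E2s N = (\<Sum>k\<le>N. (e k)^2)" for N
  have Rn: "real (R A n) = fps_nth (Xf * Xf) n" for n
    unfolding R_eq Xf_def ind_def by (simp add: fps_mult_nth atLeast0AtMost)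
  have Rrec: "real (R A n) = (\<Sum>k\<le>n. b k * b (n - k)) + e n - (if n = 0 then 0 else e (n - 1))" for n
  proof (cases n)
    case 0 thus ?thesis using hA[of 0] by simp
  next
    case (Suc m)
    have "(\<Sum>n\<le>Suc m. real (R A n)) - (\<Sum>n\<le>m. real (R A n)) =
       ((\<Sum>n\<le>Suc m. \<Sum>k\<le>n. b k * b (n - k)) + e (Suc m)) - ((\<Sum>n\<le>m. \<Sum>k\<le>n. b k * b (n - k)) + e m)"
      using hA[of "Suc m"] hA[of m] by simp
    thus ?thesis using Suc by simp
  qed
  have XE: "fps_nth ((1 - fps_X) * Ef) n = e n - (if n = 0 then 0 else e (n-1))" for n
    by (simp add: left_diff_distrib Ef_def)
  have idX: "Xf * Xf = Bf * Bf + (1 - fps_X) * Ef"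
  proof (rule fps_ext)
    fix n
    show "fps_nth (Xf * Xf) n = fps_nth (Bf * Bf + (1 - fps_X) * Ef) n"
      unfolding Rn[symmetric] Rrec fps_add_nth XE by (simp add: Bf_def fps_mult_nth atLeast0AtMost)
  qed
  obtain z where z: "limsup (\<lambda>n. ereal (b n)) < z" "z < 1" using h3 dense by blast
  obtain \<beta> where \<beta>z: "z = ereal \<beta>" using z by (cases z) auto
  have \<beta>1: "\<beta> < 1" using z \<beta>z by simp
  have "eventually (\<lambda>n. ereal (b n) < z) sequentially" using z(1) by (rule Limsup_lessD)
  hence "eventually (\<lambda>n. b n < \<beta>) sequentially" using \<beta>z by simp
  with h1 have "eventually (\<lambda>n. 0 < b n \<and> b n < \<beta>) sequentially" by (rule eventually_conj)
  then obtain n0 where n0: "\<And>n. n \<ge> n0 \<Longrightarrow> 0 < b n \<and> b n < \<beta>" by (auto simp: eventually_sequentially)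
  have \<beta>0: "\<beta> > 0" using n0[of n0] by simp
  define Kb where "Kb = 1 + (\<Sum>k<n0. \<bar>b k\<bar>)"
  have bKb: "\<bar>b n\<bar> \<le> Kb" for n
  proof (cases "n < n0")
    case True
    have "\<bar>b n\<bar> \<le> (\<Sum>k<n0. \<bar>b k\<bar>)" by (rule member_le_sum) (use True in auto)
    thus ?thesis by (simp add: Kb_def)
  next
    case False
    hence "\<bar>b n\<bar> \<le> 1" using n0[of n] \<beta>1 by simp
    moreover have "0 \<le> (\<Sum>k<n0. \<bar>b k\<bar>)" by (intro sum_nonneg) auto
    ultimately show ?thesis unfolding Kb_def by linarith
  qed
  have rX: "fps_conv_radius Xf \<ge> 1" unfolding Xf_def by (rule radius_bounded[where K=1]) (simp add: ind_def)
  have rB: "fps_conv_radius Bf \<ge> 1" unfolding Bf_def by (rule radius_bounded[where K=Kb]) (simp add: bKb)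
  have rG1: "fps_conv_radius G1 \<ge> 1" unfolding G1_def by (rule radius_bounded[where K=1]) simp
  have G1X: "(1 - fps_X) * G1 = 1"
  proof (rule fps_ext)
    fix n show "fps_nth ((1 - fps_X) * G1) n = fps_nth 1 n" by (cases n) (simp_all add: G1_def algebra_simps)
  qed
  have rE: "fps_conv_radius Ef \<ge> 1"
  proof -
    have "Ef = G1 * (Xf * Xf - Bf * Bf)"
      using G1X by (metis (no_types, lifting) add_diff_cancel_left' idX mult.assoc mult.commute mult_1)
    moreover have "fps_conv_radius (Xf * Xf - Bf * Bf) \<ge> 1"
      using fps_conv_radius_diff[of "Xf * Xf" "Bf * Bf"] radius_ge1_mult[OF rX rX] radius_ge1_mult[OF rB rB]
      by (meson min.boundedI order.trans)
    ultimately show ?thesis using radius_ge1_mult[OF rG1] by simp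
  qed
  have BsSuc: "Bs (Suc n) = Bs n + b (Suc n)" for n by (simp add: Bs_def)
  have Bs_mono: "Bs i \<le> Bs j" if "n0 \<le> i" "i \<le> j" for i j
  proof (rule mono_from)
    fix n assume "n0 \<le> n"
    thus "Bs n \<le> Bs (Suc n)" using n0[of "Suc n"] BsSuc[of n] by simp
  qed (use that in auto)
  have E20: "E2s i \<ge> 0" for i unfolding E2s_def by (intro sum_nonneg) auto
  have B20: "B2s i \<ge> 0" for i unfolding B2s_def by (intro sum_nonneg) auto
  have E2_mono: "E2s i \<le> E2s j" if "i \<le> j" for i j
    unfolding E2s_def by (rule sum_mono2) (use that in auto)
  have B2_mono: "B2s i \<le> B2s j" if "i \<le> j" for i j
    unfolding B2s_def by (rule sum_mono2) (use that in auto)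
  show False
  proof (cases "\<exists>K. \<forall>N. Bs N \<le> K")
    case True
    then obtain K where K: "\<And>N. Bs N \<le> K" by blast
    define K' where "K' = 1 + \<bar>K\<bar> + \<bar>Bs n0\<bar>"
    have K'1: "K' \<ge> 1" by (simp add: K'_def)
    have BsK: "\<bar>Bs N\<bar> \<le> K'" if "N \<ge> n0" for N
      using K[of N] Bs_mono[of n0 N] that unfolding K'_def by (auto simp: abs_le_iff)
    define c0 where "c0 = (b n0)^2"
    have c0: "c0 > 0" using n0[of n0] by (simp add: c0_def)
    have B2c: "B2s N \<ge> c0" if "N \<ge> n0" for N
      unfolding B2s_def c0_def by (rule member_le_sum) (use that in auto)
    have e0: "e k = 0" for k
    proof (rule ccontr)
      assume ek: "e k \<noteq> 0"
      define \<eta> where "\<eta> = c0 * (e k)^2 / K'^3"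
      have \<eta>0: "\<eta> > 0" using c0 ek K'1 by (simp add: \<eta>_def)
      have "eventually (\<lambda>n. dist ((\<Sum>k\<le>n. (b k)\<^sup>2) * (\<Sum>k\<le>n. (e k)\<^sup>2) / (\<Sum>k\<le>n. b k) ^ 3) 0 < \<eta>) sequentially"
        using h4 \<eta>0 by (rule tendstoD)
      then obtain N1 where N1: "\<And>n. n \<ge> N1 \<Longrightarrow> \<bar>B2s n * E2s n / (Bs n)^3\<bar> < \<eta>"
        by (auto simp: eventually_sequentially B2s_def E2s_def Bs_def dist_real_def)
      define N where "N = max (max n0 k) N1"
      have "Bs N < Bs (Suc N)" using n0[of "Suc N"] BsSuc[of N] by (simp add: N_def)
      then obtain L where L: "L \<ge> N" "Bs L \<noteq> 0" by (metis less_irrefl le_Suc_eq order_refl)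
      have Ln0: "L \<ge> n0" "L \<ge> k" "L \<ge> N1" using L by (auto simp: N_def)
      have E2k: "E2s L \<ge> (e k)^2" unfolding E2s_def by (rule member_le_sum) (use Ln0 in auto)
      have pos: "0 < \<bar>Bs L\<bar>^3" using L by simp
      have "\<eta> = c0 * (e k)^2 / K'^3" by (simp add: \<eta>_def)
      also have "\<dots> \<le> B2s L * E2s L / \<bar>Bs L\<bar>^3"
      proof (rule frac_le)
        show "0 \<le> B2s L * E2s L" unfolding B2s_def E2s_def by (intro mult_nonneg_nonneg sum_nonneg) auto
        show "c0 * (e k)^2 \<le> B2s L * E2s L" using B2c[OF Ln0(1)] E2k c0 by (intro mult_mono) auto
        show "0 < \<bar>Bs L\<bar>^3" by (rule pos)
        show "\<bar>Bs L\<bar>^3 \<le> K'^3" using BsK[OF Ln0(1)] by (intro power_mono) auto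
      qed
      also have "\<dots> = \<bar>B2s L * E2s L / (Bs L)^3\<bar>"
      proof -
        have "0 \<le> B2s L * E2s L" unfolding B2s_def E2s_def by (intro mult_nonneg_nonneg sum_nonneg) auto
        thus ?thesis by (simp add: abs_divide power_abs)
      qed
      also have "\<dots> < \<eta>" by (rule N1[OF Ln0(3)])
      finally show False by simp
    qed
    have "Ef = 0" unfolding Ef_def using e0 by (simp add: fps_eq_iff)
    hence "Xf * Xf = Bf * Bf" using idX by simp
    hence "(Xf - Bf) * (Xf + Bf) = 0" by (simp add: algebra_simps)
    hence "Xf - Bf = 0 \<or> Xf + Bf = 0" by simp
    hence "fps_nth Xf n0 = fps_nth Bf n0 \<or> fps_nth Xf n0 = - fps_nth Bf n0"
    proof
      assume "Xf - Bf = 0" hence "Xf = Bf" by simp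
      thus ?thesis by simp
    next
      assume "Xf + Bf = 0" hence "Xf = - Bf" by (simp add: eq_neg_iff_add_eq_0)
      thus ?thesis by simp
    qed
    hence "real (ind n0) = b n0 \<or> real (ind n0) = - b n0" by (simp add: Xf_def Bf_def)
    thus False using n0[of n0] \<beta>1 by (auto simp: ind_def split: if_splits)
  next
    case False
    hence unb: "\<exists>N. Bs N > K" for K by (meson not_le)
    have ev_big: "\<exists>N0\<ge>n0. \<forall>N\<ge>N0. Bs N > K" for K
    proof -
      define T0 where "T0 = (\<Sum>j\<le>n0. \<bar>Bs j\<bar>)"
      obtain N where N: "Bs N > max K T0" using unb by blast
      have Nn0: "N \<ge> n0"
      proof (rule ccontr)
        assume "\<not> N \<ge> n0"
        hence "\<bar>Bs N\<bar> \<le> T0" unfolding T0_def by (intro member_le_sum) auto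
        thus False using N abs_ge_self[of "Bs N"] by simp
      qed
      have "\<forall>N'\<ge>N. Bs N' > K"
      proof (intro allI impI)
        fix N' assume "N \<le> N'"
        hence "Bs N \<le> Bs N'" by (rule Bs_mono[OF Nn0])
        thus "Bs N' > K" using N by simp
      qed
      thus ?thesis using Nn0 by blast
    qed
    define \<delta> where "\<delta> = (1 + \<beta>) / 2"
    have \<delta>: "0 < \<delta>" "\<delta> < 1" "\<beta> < \<delta>" using \<beta>0 \<beta>1 by (auto simp: \<delta>_def)
    define \<epsilon> where "\<epsilon> = \<delta>*(1-\<delta>)^2/16"
    have \<epsilon>0: "\<epsilon> > 0" using \<delta> by (simp add: \<epsilon>_def)
    obtain C n2 where C: "\<And>n. n \<ge> n2 \<Longrightarrow> Bs (2*n) / Bs n < C"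
      using h2 by (auto simp: eventually_sequentially Bs_def)
    define D where "D = max 2 (C^3)"
    have D2: "D \<ge> 2" by (simp add: D_def)
    have D0: "D > 0" using D2 by simp
    define \<epsilon>' where "\<epsilon>' = \<epsilon> / (64 * D^7)"
    have \<epsilon>'0: "\<epsilon>' > 0" using \<epsilon>0 D0 by (simp add: \<epsilon>'_def)
    have "eventually (\<lambda>n. dist ((\<Sum>k\<le>n. (b k)\<^sup>2) * (\<Sum>k\<le>n. (e k)\<^sup>2) / (\<Sum>k\<le>n. b k) ^ 3) 0 < \<epsilon>') sequentially"
      using h4 \<epsilon>'0 by (rule tendstoD)
    then obtain n4 where n4: "\<And>n. n \<ge> n4 \<Longrightarrow> \<bar>B2s n * E2s n / (Bs n)^3\<bar> < \<epsilon>'"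
      by (auto simp: eventually_sequentially B2s_def E2s_def Bs_def dist_real_def)
    obtain P0 where P0: "P0 \<ge> n0" "\<And>N. N \<ge> P0 \<Longrightarrow> Bs N > 0" using ev_big[of 0] by blast
    define J0 where "J0 = max (max n0 n2) (max n4 (max P0 1))"
    have J0: "J0 \<ge> n0" "J0 \<ge> n2" "J0 \<ge> n4" "J0 \<ge> P0" "J0 \<ge> 1" by (auto simp: J0_def)
    define K\<phi> where "K\<phi> = (\<Sum>j<J0. E2s j * B2s j)"
    have K\<phi>0: "K\<phi> \<ge> 0" unfolding K\<phi>_def using E20 B20 by (intro sum_nonneg mult_nonneg_nonneg) auto
    define K1 where "K1 = (\<Sum>n<n0. \<bar>b n\<bar>)"
    have K10: "K1 \<ge> 0" unfolding K1_def by (intro sum_nonneg) auto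
    define K0 where "K0 = (\<Sum>n<n0. \<bar>(b n)^2 - \<beta> * b n\<bar>)"
    have K00: "K0 \<ge> 0" unfolding K0_def by (intro sum_nonneg) auto
    define T where "T = K0 / (\<delta> - \<beta>) + 4 / (1 - \<delta>) + 2"
    have Tq1: "K0 / (\<delta> - \<beta>) \<ge> 0" using K00 \<delta> by simp
    have Tq2: "4 / (1 - \<delta>) > 0" using \<delta> by simp
    have T: "T \<ge> K0 / (\<delta> - \<beta>)" "T > 4 / (1 - \<delta>)" "T \<ge> 1"
      using Tq1 Tq2 unfolding T_def by linarith+
    define Lb where "Lb = 2 * D^2 * (1 + 2 * K\<phi> / \<epsilon> + 2 * K1 + T)"
    obtain N0 where N0: "N0 \<ge> n0" "\<And>N. N \<ge> N0 \<Longrightarrow> Bs N > Lb" using ev_big[of Lb] by blast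
    define N where "N = max N0 J0"
    have NJ0: "N \<ge> J0" and BsN: "Bs N > Lb" using N0 by (auto simp: N_def)
    have Npos: "N > 0" using J0 NJ0 by simp
    define W where "W = Bs N / (2 * D^2)"
    have W: "W \<ge> 1 + 2 * K\<phi> / \<epsilon> + 2 * K1 + T"
      using BsN D0 by (simp add: W_def Lb_def field_simps)
    have W1: "W \<ge> 1" using W K\<phi>0 \<epsilon>0 K10 T by (smt (verit) divide_nonneg_pos)
    define s where "s = root N (1/D)"
    have s0: "s > 0" using Npos D0 by (simp add: s_def)
    have s1: "s < 1" using Npos D2 by (simp add: s_def)
    have sN: "s^N = 1/D" using Npos D0 by (simp add: s_def)
    have sND: "s^N * D = 1" using sN D0 by simp
    define x where "x = s^2"
    have x: "0 < x" "x < 1" using s0 s1 by (auto simp: x_def abs_square_less_1)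
    have xN: "x^N = 1/D^2" unfolding x_def by (simp add: power_mult[symmetric] mult.commute power_mult sN power_divide)
    have Bspos: "Bs n > 0" if "n \<ge> J0" for n using P0 J0 that by simp
    have dbl: "(Bs (2*n))^3 \<le> D * (Bs n)^3" if "n \<ge> J0" for n
    proof -
      have p1: "Bs n > 0" using Bspos that by simp
      have p2: "Bs (2*n) > 0" using Bspos that by simp
      have "Bs (2*n) < C * Bs n" using C[of n] J0 that p1 by (simp add: pos_divide_less_eq)
      hence "(Bs (2*n))^3 \<le> (C * Bs n)^3" using p2 by (intro power_mono) auto
      also have "\<dots> = C^3 * (Bs n)^3" by (simp add: power_mult_distrib)
      also have "\<dots> \<le> D * (Bs n)^3" using p1 by (intro mult_right_mono) (auto simp: D_def)
      finally show ?thesis .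
    qed
    have gdbl: "(Bs j)^3 * s^j \<le> D * (Bs N)^3" if "J0 \<le> j" for j
    proof (rule doubling[where g="\<lambda>n. (Bs n)^3", OF _ _ _ s0 s1 sND NJ0 Npos that])
      show "(Bs i)^3 \<le> (Bs j)^3" if "J0 \<le> i" "i \<le> j" for i j
        using Bs_mono[of i j] Bspos[of i] that J0 by (intro power_mono) auto
      show "(Bs (2*n))^3 \<le> D * (Bs n)^3" if "J0 \<le> n" for n using dbl that by simp
      show "0 \<le> (Bs n)^3" if "J0 \<le> n" for n using Bspos[of n] that by simp
    qed
    have phi2: "E2s m * B2s m * s^m \<le> \<epsilon>' * D * (Bs N)^3" if "J0 \<le> m" for m
    proof -
      have pm: "Bs m > 0" using Bspos that by simp
      have "\<bar>B2s m * E2s m / (Bs m)^3\<bar> < \<epsilon>'" using n4[of m] J0 that by simp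
      hence "B2s m * E2s m / (Bs m)^3 < \<epsilon>'" using abs_ge_self[of "B2s m * E2s m / (Bs m)^3"] by linarith
      hence "B2s m * E2s m < \<epsilon>' * (Bs m)^3" using pm by (simp add: pos_divide_less_eq)
      hence "E2s m * B2s m * s^m \<le> \<epsilon>' * (Bs m)^3 * s^m" using s0 by (intro mult_right_mono) (auto simp: mult.commute)
      also have "\<dots> = \<epsilon>' * ((Bs m)^3 * s^m)" by simp
      also have "\<dots> \<le> \<epsilon>' * (D * (Bs N)^3)" using gdbl[OF that] \<epsilon>'0 by (intro mult_left_mono) auto
      finally show ?thesis by simp
    qed
    have phi1: "E2s m * B2s m \<le> K\<phi>" if "m < J0" for m
      unfolding K\<phi>_def by (rule member_le_sum) (use that E20 B20 in auto)
    define B2f where "B2f = Abs_fps (\<lambda>n. (fps_nth Bf n)^2)"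
    define E2f where "E2f = Abs_fps (\<lambda>n. (fps_nth Ef n)^2)"
    have rB2: "fps_conv_radius B2f \<ge> 1" unfolding B2f_def by (rule radius_sq[OF rB])
    have rE2: "fps_conv_radius E2f \<ge> 1" unfolding E2f_def by (rule radius_sq[OF rE])
    have E2P: "Abs_fps E2s = E2f * G1"
      by (rule fps_ext) (simp add: E2s_def E2f_def Ef_def G1_def fps_mult_nth atLeast0AtMost)
    have B2P: "Abs_fps B2s = B2f * G1"
      by (rule fps_ext) (simp add: B2s_def B2f_def Bf_def G1_def fps_mult_nth atLeast0AtMost)
    have rE2P: "fps_conv_radius (Abs_fps E2s) \<ge> 1" unfolding E2P by (rule radius_ge1_mult[OF rE2 rG1])
    have rB2P: "fps_conv_radius (Abs_fps B2s) \<ge> 1" unfolding B2P by (rule radius_ge1_mult[OF rB2 rG1])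
    have r1X: "fps_conv_radius (1 - fps_X :: real fps) \<ge> 1" by (rule radius_bounded[where K=1]) simp
    have ev1X: "eval_fps (1 - fps_X :: real fps) x = 1 - x"
      by (subst eval_fps_diff) auto
    have lt: "norm x < fps_conv_radius F" if "fps_conv_radius F \<ge> 1" for F :: "real fps"
      by (rule lt_radius[OF that]) (use x in auto)
    define Fx where "Fx = eval_fps Xf x"
    define Bv where "Bv = eval_fps Bf x"
    define Ex where "Ex = eval_fps Ef x"
    define B2x where "B2x = eval_fps B2f x"
    define E2x where "E2x = eval_fps E2f x"
    have E2x_eq: "E2x = (1 - x) * eval_fps (Abs_fps E2s) x"
    proof -
      have "E2f = (1 - fps_X) * Abs_fps E2s" unfolding E2P by (simp add: G1X mult.assoc[symmetric] mult.commute[of _ E2f])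
      hence "E2x = eval_fps ((1 - fps_X) * Abs_fps E2s) x" unfolding E2x_def by simp
      also have "\<dots> = eval_fps (1 - fps_X) x * eval_fps (Abs_fps E2s) x"
        by (rule eval_fps_mult[OF lt[OF r1X] lt[OF rE2P]])
      finally have "E2x = eval_fps (1 - fps_X) x * eval_fps (Abs_fps E2s) x" .
      thus ?thesis by (simp add: ev1X)
    qed
    have B2x_eq: "B2x = (1 - x) * eval_fps (Abs_fps B2s) x"
    proof -
      have "B2f = (1 - fps_X) * Abs_fps B2s" unfolding B2P by (simp add: G1X mult.assoc[symmetric] mult.commute[of _ B2f])
      hence "B2x = eval_fps ((1 - fps_X) * Abs_fps B2s) x" unfolding B2x_def by simp
      also have "\<dots> = eval_fps (1 - fps_X) x * eval_fps (Abs_fps B2s) x"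
        by (rule eval_fps_mult[OF lt[OF r1X] lt[OF rB2P]])
      finally have "B2x = eval_fps (1 - fps_X) x * eval_fps (Abs_fps B2s) x" .
      thus ?thesis by (simp add: ev1X)
    qed
    have prodx: "E2x * B2x \<le> K\<phi> + 4 * (\<epsilon>' * D * (Bs N)^3)"
    proof -
      have m: "eval_fps (Abs_fps E2s * Abs_fps B2s) x = eval_fps (Abs_fps E2s) x * eval_fps (Abs_fps B2s) x"
        by (rule eval_fps_mult[OF lt[OF rE2P] lt[OF rB2P]])
      have eq: "E2x * B2x = (1 - x)^2 * eval_fps (Abs_fps E2s * Abs_fps B2s) x"
        unfolding E2x_eq B2x_eq m by (simp add: power2_eq_square mult_ac)
      have P: "(1 - s^2)^2 * eval_fps (Abs_fps E2s * Abs_fps B2s) (s^2) \<le> K\<phi> + 4 * (\<epsilon>' * D * (Bs N)^3)"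
      proof (rule PROD)
        show "\<And>i j. i \<le> j \<Longrightarrow> E2s i \<le> E2s j" by (rule E2_mono)
        show "\<And>i j. i \<le> j \<Longrightarrow> B2s i \<le> B2s j" by (rule B2_mono)
        show "\<And>m. m < J0 \<Longrightarrow> E2s m * B2s m \<le> K\<phi>" by (rule phi1)
        show "\<And>m. J0 \<le> m \<Longrightarrow> E2s m * B2s m * s^m \<le> \<epsilon>' * D * (Bs N)^3" by (rule phi2)
        show "0 \<le> \<epsilon>' * D * (Bs N)^3" using \<epsilon>'0 D0 Bspos[OF NJ0] by simp
      qed (use E20 B20 K\<phi>0 s0 s1 rE2P rB2P in auto)
      show ?thesis using eq P by (simp add: x_def)
    qed
    have core: "real M * x^M * Fx \<le> real M * real M * B2x + sqrt E2x * sqrt (2 * real M)" if "M \<ge> 1" for M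
      using CORE_INEQ[OF Xf_def idX rX rB rE s0 s1 that]
      unfolding Fx_def B2x_def E2x_def B2f_def E2f_def x_def .
    have Fid: "Fx^2 = Bv^2 + (1-x)*Ex"
    proof -
      have "eval_fps (Xf * Xf) x = eval_fps (Bf * Bf + (1 - fps_X) * Ef) x" by (simp only: idX)
      moreover have "eval_fps (Xf * Xf) x = Fx^2" unfolding Fx_def power2_eq_square
        by (rule eval_fps_mult[OF lt[OF rX] lt[OF rX]])
      moreover have "eval_fps (Bf * Bf + (1 - fps_X) * Ef) x = Bv^2 + (1-x)*Ex"
      proof -
        have "eval_fps (Bf * Bf + (1 - fps_X) * Ef) x = eval_fps (Bf * Bf) x + eval_fps ((1 - fps_X) * Ef) x"
          by (rule eval_fps_add[OF lt[OF radius_ge1_mult[OF rB rB]] lt[OF radius_ge1_mult[OF r1X rE]]])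
        also have "eval_fps (Bf * Bf) x = Bv^2" unfolding Bv_def power2_eq_square
          by (rule eval_fps_mult[OF lt[OF rB] lt[OF rB]])
        also have "eval_fps ((1 - fps_X) * Ef) x = (1-x) * Ex" unfolding Ex_def ev1X[symmetric]
          by (rule eval_fps_mult[OF lt[OF r1X] lt[OF rE]])
        finally show ?thesis .
      qed
      ultimately show ?thesis by simp
    qed
    have F0: "Fx \<ge> 0" unfolding Fx_def eval_fps_def Xf_def
      by (intro suminf_nonneg) (use summable_fps[OF lt[OF rX]] x in \<open>auto simp: Xf_def\<close>)
    have cs1: "Ex^2 \<le> E2x / (1-x)" unfolding Ex_def E2x_def E2f_def x_def by (rule CSx[OF rE s0 s1])
    have cs2: "Bv^2 \<le> B2x / (1-x)" unfolding Bv_def B2x_def B2f_def x_def by (rule CSx[OF rB s0 s1])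
    have sumB: "summable (\<lambda>n. b n * x^n)" using summable_fps[OF lt[OF rB]] by (simp add: Bf_def)
    have sumB2: "summable (\<lambda>n. (b n)^2 * x^n)" using summable_fps[OF lt[OF rB2]] by (simp add: B2f_def Bf_def)
    have sumE2: "summable (\<lambda>n. (e n)^2 * x^n)" using summable_fps[OF lt[OF rE2]] by (simp add: E2f_def Ef_def)
    have B2x_sum: "B2x = (\<Sum>n. (b n)^2 * x^n)" by (simp add: B2x_def B2f_def Bf_def eval_fps_def)
    have Bv_sum: "Bv = (\<Sum>n. b n * x^n)" by (simp add: Bv_def Bf_def eval_fps_def)
    have B2pos: "B2x > 0"
    proof -
      have "(\<Sum>n\<in>{n0}. (b n)^2 * x^n) \<le> (\<Sum>n. (b n)^2 * x^n)"
        by (rule sum_le_suminf[OF sumB2]) (use x in auto)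
      moreover have "(b n0)^2 * x^n0 > 0" using n0[of n0] x by simp
      ultimately show ?thesis unfolding B2x_sum by simp
    qed
    have E2x0: "E2x \<ge> 0" unfolding E2x_def eval_fps_def E2f_def
      by (intro suminf_nonneg) (use sumE2 x in \<open>auto simp: Ef_def\<close>)
    have Bvlow: "Bv \<ge> x^N * Bs N - 2 * K1"
      unfolding Bv_sum Bs_def K1_def
      by (rule Bv_lower[OF _ _ _ sumB]) (use n0 x N0 in \<open>auto simp: N_def\<close>)
    have BvW: "Bv \<ge> W" "Bv \<ge> T"
    proof -
      have "x^N * Bs N = 2 * W" using D0 by (simp add: xN W_def)
      hence "Bv \<ge> 2 * W - 2 * K1" using Bvlow by simp
      moreover have "W \<ge> 2 * K1 + T" using W K\<phi>0 \<epsilon>0 by (smt (verit) divide_nonneg_pos)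
      ultimately show "Bv \<ge> W" "Bv \<ge> T" using T K10 by linarith+
    qed
    have b2: "B2x \<le> \<delta> * Bv"
    proof -
      have "B2x \<le> \<beta> * Bv + K0"
        unfolding B2x_sum Bv_sum K0_def by (rule B2_bound[OF n0 _ _ sumB sumB2]) (use x in auto)
      moreover have "K0 \<le> (\<delta> - \<beta>) * Bv"
      proof -
        have "K0 / (\<delta> - \<beta>) \<le> Bv" using T BvW by linarith
        thus ?thesis using \<delta> by (simp add: pos_divide_le_eq mult.commute)
      qed
      ultimately show ?thesis by (simp add: algebra_simps)
    qed
    have prod: "E2x * B2x \<le> \<delta>*(1-\<delta>)^2/16 * Bv^3"
    proof -
      have "4 * (\<epsilon>' * D * (Bs N)^3) = \<epsilon> * W^3 / 2"
      proof -
        have D7: "D * D^6 = D^7" by (simp add: eval_nat_numeral)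
        show ?thesis using D0 D7 by (simp add: \<epsilon>'_def W_def power_divide power_mult_distrib field_simps)
      qed
      moreover have "K\<phi> \<le> \<epsilon> * W^3 / 2"
      proof -
        have "2 * K\<phi> / \<epsilon> \<le> W" using W K10 T by linarith
        hence "K\<phi> \<le> \<epsilon> * W / 2" using \<epsilon>0 by (simp add: field_simps)
        also have "\<dots> \<le> \<epsilon> * W^3 / 2"
        proof -
          have "W \<le> W^3" using W1 by (simp add: power3_eq_cube) (smt (verit) mult_le_cancel_left1 mult_nonneg_nonneg)
          thus ?thesis using \<epsilon>0 by simp
        qed
        finally show ?thesis .
      qed
      moreover have W3: "W^3 \<le> Bv^3" using BvW W1 by (intro power_mono) auto
      moreover have "\<epsilon> * W^3 \<le> \<epsilon> * Bv^3" using W3 \<epsilon>0 by (intro mult_left_mono) auto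
      ultimately have "E2x * B2x \<le> \<epsilon> * Bv^3" using prodx by linarith
      thus ?thesis by (simp add: \<epsilon>_def)
    qed
    show False
    proof (rule FINAL[OF x core Fid F0 cs1 cs2 B2pos E2x0 b2 prod \<delta>(1) \<delta>(2)])
      show "Bv > 4 / (1 - \<delta>)" using T BvW by linarith
      show "Bv \<ge> 1" using T BvW by linarith
    qed
  qed
qed

end
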